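(* Let $Q^f$ be a kernel operator on $\mathcal{X}$ satisfying Assumptions 1, 2 and 3, let $\Lambda>0$ be the spectral radius of $Q^f$ on $L^\infty_W(\mathcal{X})$ and $h\in L^\infty_W(\mathcal{X})$ an eigenfunction with $Q^fh=\Lambda h$, $\|h\|_{L^\infty_W}=1$ and $0<h(x)<+\infty$ for all $x$ (such $h$ exists). Define the $h$-transformed kernel $Q_h\phi=\Lambda^{-1}h^{-1}Q^f(h\phi)$. Then $Q_h$ is a Markov kernel ($Q_h\mathbb{1}=\mathbb{1}$), $Wh^{-1}\geq1$, and $Wh^{-1}$ is a Lyapunov function for $Q_h$, i.e. there exist $\gamma\in(0,1)$ and $C\geq0$ with $Q_h(Wh^{-1})\leq\gamma Wh^{-1}+C$. Moreover, $Q_h$ has a unique invariant probability measure $\mu_h\in\mathcal{P}(\mathcal{X})$, it satisfies $\mu_h(Wh^{-1})<+\infty$, and there exist constants $c>0$ and $\bar\alpha\in(0,1)$ such that for every $\phi\in L^\infty_{Wh^{-1}}(\mathcal{X})$ and every $k\geq1$, $$\big\|Q_h^k\phi-\mu_h(\phi)\big\|_{L^\infty_{Wh^{-1}}}\leq c\,\bar\alpha^k\,\|\phi-\mu_h(\phi)\|_{L^\infty_{Wh^{-1}}}.$$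
   Context: $\mathcal{X}$ is a Polish space and $\mathcal{P}(\mathcal{X})$ denotes the set of probability measures on $\mathcal{X}$. A kernel operator $Q^f$ on $\mathcal{X}$ is a map such that for every $x\in\mathcal{X}$, $Q^f(x,\cdot)$ is a positive measure of finite mass, and for every measurable $A\subset\mathcal{X}$, $x\mapsto Q^f(x,A)$ is measurable; one writes $(Q^f\varphi)(x)=\int_{\mathcal{X}}\varphi(y)\,Q^f(x,dy)$, $\mu(\varphi)=\int\varphi\,d\mu$, and $\mathbb{1}$ for the constant function $1$. $(K_n)_{n\geq1}$ is a fixed increasing sequence of compact subsets of $\mathcal{X}$ such that every compact $K\subset\mathcal{X}$ is contained in some $K_m$. For a measurable $V:\mathcal{X}\to[1,+\infty)$, $L^\infty_V(\mathcal{X})$ is the Banach space of measurable $\varphi$ with $\|\varphi\|_{L^\infty_V}:=\sup_{x}|\varphi(x)|/V(x)<+\infty$. Assumption 1 (Lyapunov): there exist $W:\mathcal{X}\to[1,+\infty)$ bounded on compact sets and positive sequences $(\gamma_n)_{n\ge1}$, $(b_n)_{n\ge1}$ with $\gamma_n\to0$ such that for all $n\geq1$, $Q^fW\leq \gamma_n W+b_n\mathbb{1}_{K_n}$ pointwise. Assumption 2 (minorization and irreducibility): for each $n\geq1$ there exist $\eta_n\in\mathcal{P}(\mathcal{X})$ and $\alpha_n>0$ such that $Q^f(x,\cdot)\geq\alpha_n\eta_n(\cdot)$ (as measures) for all $x\in K_n$; moreover, for any $n_0\geq1$ and any $\varphi\in L^\infty_W(\mathcal{X})$ with $\varphi\geq0$,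 if $\eta_n(\varphi)=0$ for all $n\geq n_0$, then $(Q^f\varphi)(x)=0$ for all $x\in\mathcal{X}$. Assumption 3 (local regularity): for every $n\geq1$ and every measurable function $\varphi$ bounded on $K_n$, the function $Q^f(\varphi\mathbb{1}_{K_n})$ is continuous on $K_n$. The spectral radius of $Q^f$ on $L^\infty_W(\mathcal{X})$ is $\Lambda=\lim_{k\to\infty}\|(Q^f)^k\|^{1/k}$ (operator norm on $L^\infty_W$). *)

theory Defs
  imports "HOL-Probability.Probability"
begin

definition is_kernel :: "('a::polish_space \<Rightarrow> 'a measure) \<Rightarrow> bool" where
  "is_kernel Q \<longleftrightarrow>
     (\<forall>x. sets (Q x) = sets borel \<and> finite_measure (Q x)) \<and>
     (\<forall>A\<in>sets borel. (\<lambda>x. emeasure (Q x) A) \<in> borel_measurable borel)"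

definition kop :: "('a \<Rightarrow> 'a measure) \<Rightarrow> ('a \<Rightarrow> real) \<Rightarrow> 'a \<Rightarrow> real" where
  "kop Q \<phi> x = (\<integral>y. \<phi> y \<partial>(Q x))"

definition normV :: "('a \<Rightarrow> real) \<Rightarrow> ('a \<Rightarrow> real) \<Rightarrow> real" where
  "normV V \<phi> = (SUP x. \<bar>\<phi> x\<bar> / V x)"

definition LinfV :: "('a::topological_space \<Rightarrow> real) \<Rightarrow> ('a \<Rightarrow> real) set" where
  "LinfV V = {\<phi>. \<phi> \<in> borel_measurable borel \<and> bdd_above (range (\<lambda>x. \<bar>\<phi> x\<bar> / V x))}"

definition opnormV :: "('a::topological_space \<Rightarrow> real) \<Rightarrow> (('a \<Rightarrow> real) \<Rightarrow> ('a \<Rightarrow> real)) \<Rightarrow> real" where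
  "opnormV W T = (SUP \<phi>\<in>{\<phi>\<in>LinfV W. normV W \<phi> \<le> 1}. normV W (T \<phi>))"

definition spectral_radiusV :: "('a::topological_space \<Rightarrow> real) \<Rightarrow> ('a \<Rightarrow> 'a measure) \<Rightarrow> real" where
  "spectral_radiusV W Q = lim (\<lambda>k. root k (opnormV W (kop Q ^^ k)))"

definition htrans :: "('a \<Rightarrow> 'a measure) \<Rightarrow> real \<Rightarrow> ('a \<Rightarrow> real) \<Rightarrow> ('a \<Rightarrow> real) \<Rightarrow> 'a \<Rightarrow> real" where
  "htrans Q \<Lambda> h \<phi> x = kop Q (\<lambda>y. h y * \<phi> y) x / (\<Lambda> * h x)"

end

theory Submission
  imports Defs
begin


definition adm :: "('a::topological_space \<Rightarrow> real) \<Rightarrow> ('a \<Rightarrow> real) set" where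
  "adm V = {\<phi>. \<phi> \<in> borel_measurable borel \<and> (\<exists>N. \<forall>x. \<bar>\<phi> x\<bar> \<le> N * V x)}"

lemma geom_tail:
  fixes s :: "nat \<Rightarrow> real"
  assumes d: "\<And>k. \<bar>s (Suc k) - s k\<bar> \<le> B * a^k" and a: "0 < a" "a < 1"
  shows "\<bar>s (k + m) - s k\<bar> \<le> B * (a^k - a^(k+m)) / (1 - a)"
proof (induction m)
  case 0 then show ?case by simp
next
  case (Suc m)
  have "\<bar>s (k + Suc m) - s k\<bar> \<le> \<bar>s (k + m) - s k\<bar> + \<bar>s (Suc (k+m)) - s (k+m)\<bar>" by simp
  also have "\<dots> \<le> B * (a^k - a^(k+m)) / (1 - a) + B * a^(k+m)" using Suc d[of "k+m"] by linarith
  also have "\<dots> = B * (a^k - a^(k + Suc m)) / (1 - a)" using a by (simp add: field_simps)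
  finally show ?case .
qed

lemma geom_conv:
  fixes s :: "nat \<Rightarrow> real"
  assumes d: "\<And>k. \<bar>s (Suc k) - s k\<bar> \<le> B * a^k" and a: "0 < a" "a < 1"
  shows "convergent s" "\<And>k. \<bar>lim s - s k\<bar> \<le> B * a^k / (1 - a)"
proof -
  have B: "0 \<le> B" using d[of 0] by simp
  have tail: "\<And>k m. k \<le> m \<Longrightarrow> \<bar>s m - s k\<bar> \<le> B * a^k / (1 - a)"
  proof -
    fix k m :: nat assume "k \<le> m"
    then obtain j where m: "m = k + j" using le_Suc_ex by blast
    have "\<bar>s m - s k\<bar> \<le> B * (a^k - a^(k+j)) / (1 - a)" unfolding m by (rule geom_tail[OF d a])
    also have "\<dots> \<le> B * a^k / (1 - a)" using a B by (intro divide_right_mono mult_left_mono) auto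
    finally show "\<bar>s m - s k\<bar> \<le> B * a^k / (1 - a)" .
  qed
  have lim0: "(\<lambda>k. B * a^k / (1 - a)) \<longlonglongrightarrow> 0"
    using a by (intro tendsto_eq_intros LIMSEQ_power_zero) auto
  show "convergent s"
    unfolding Cauchy_convergent_iff[symmetric]
  proof (rule CauchyI)
    fix e :: real assume e: "0 < e"
    from lim0 e obtain M where M: "\<And>k. k \<ge> M \<Longrightarrow> \<bar>B * a^k / (1 - a)\<bar> < e/2"
      unfolding LIMSEQ_def dist_real_def by (metis half_gt_zero diff_zero)
    show "\<exists>M. \<forall>m\<ge>M. \<forall>n\<ge>M. norm (s m - s n) < e"
    proof (intro exI allI impI)
      fix m n assume "M \<le> m" "M \<le> n"
      then have "\<bar>s m - s M\<bar> \<le> B * a^M / (1 - a)" "\<bar>s n - s M\<bar> \<le> B * a^M / (1 - a)" using tail by auto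
      moreover have "B * a^M / (1 - a) < e/2" using M[of M] by (meson abs_less_iff le_refl)
      ultimately show "norm (s m - s n) < e" unfolding real_norm_def by linarith
    qed
  qed
  then have "s \<longlonglongrightarrow> lim s" by (simp add: convergent_LIMSEQ_iff)
  then have "(\<lambda>m. \<bar>s m - s k\<bar>) \<longlonglongrightarrow> \<bar>lim s - s k\<bar>" for k by (intro tendsto_intros)
  then show "\<bar>lim s - s k\<bar> \<le> B * a^k / (1 - a)" for k
    by (rule Lim_bounded[where M=k]) (use tail in auto)
qed

locale harris =
  fixes P :: "('a::topological_space \<Rightarrow> real) \<Rightarrow> 'a \<Rightarrow> real" and V :: "'a \<Rightarrow> real"
    and \<gamma> K R \<epsilon> :: real and \<nu> :: "('a \<Rightarrow> real) \<Rightarrow> real"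
  assumes V_meas: "V \<in> borel_measurable borel" and V_ge1: "\<And>x. 1 \<le> V x"
    and P_meas: "\<And>\<phi>. \<phi> \<in> adm V \<Longrightarrow> P \<phi> \<in> borel_measurable borel"
    and P_add: "\<And>\<phi> \<psi>. \<phi> \<in> adm V \<Longrightarrow> \<psi> \<in> adm V \<Longrightarrow> P (\<lambda>x. \<phi> x + \<psi> x) = (\<lambda>x. P \<phi> x + P \<psi> x)"
    and P_scale: "\<And>\<phi> c. \<phi> \<in> adm V \<Longrightarrow> P (\<lambda>x. c * \<phi> x) = (\<lambda>x. c * P \<phi> x)"
    and P_const: "\<And>c. P (\<lambda>_. c) = (\<lambda>_. c)"
    and P_mono: "\<And>\<phi> \<psi> x. \<phi> \<in> adm V \<Longrightarrow> \<psi> \<in> adm V \<Longrightarrow> (\<And>y. \<phi> y \<le> \<psi> y) \<Longrightarrow> P \<phi> x \<le> P \<psi> x"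
    and drift: "\<And>x. P V x \<le> \<gamma> * V x + K"
    and \<gamma>_ge: "0 \<le> \<gamma>" and \<gamma>_le: "\<gamma> \<le> 1/4" and K_ge: "0 \<le> K" and R_gt: "8 * K < R"
    and \<epsilon>_pos: "0 < \<epsilon>" and \<epsilon>_le: "\<epsilon> \<le> 1"
    and \<nu>_add: "\<And>\<phi> \<psi>. \<phi> \<in> adm V \<Longrightarrow> \<psi> \<in> adm V \<Longrightarrow> \<nu> (\<lambda>x. \<phi> x + \<psi> x) = \<nu> \<phi> + \<nu> \<psi>"
    and \<nu>_scale: "\<And>\<phi> c. \<phi> \<in> adm V \<Longrightarrow> \<nu> (\<lambda>x. c * \<phi> x) = c * \<nu> \<phi>"
    and \<nu>_one: "\<nu> (\<lambda>_. 1) = 1" and \<nu>_V: "0 \<le> \<nu> V"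
    and minor: "\<And>\<psi> x. \<psi> \<in> adm V \<Longrightarrow> (\<And>y. 0 \<le> \<psi> y) \<Longrightarrow> V x \<le> R \<Longrightarrow> \<epsilon> * \<nu> \<psi> \<le> P \<psi> x"
    and P_conv: "\<And>\<phi>s \<phi> N x. (\<And>n. \<phi>s n \<in> adm V) \<Longrightarrow> \<phi> \<in> adm V \<Longrightarrow> (\<And>n y. \<bar>\<phi>s n y\<bar> \<le> N * V y)
        \<Longrightarrow> (\<And>y. (\<lambda>n. \<phi>s n y) \<longlonglongrightarrow> \<phi> y) \<Longrightarrow> (\<lambda>n. P (\<phi>s n) x) \<longlonglongrightarrow> P \<phi> x"
begin

lemma V_pos: "0 < V x" using V_ge1[of x] by linarith

lemma admI: "\<phi> \<in> borel_measurable borel \<Longrightarrow> (\<And>x. \<bar>\<phi> x\<bar> \<le> N * V x) \<Longrightarrow> \<phi> \<in> adm V"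
  unfolding adm_def by blast

lemma admE: assumes "\<phi> \<in> adm V" obtains N where "0 \<le> N" "\<And>x. \<bar>\<phi> x\<bar> \<le> N * V x" "\<phi> \<in> borel_measurable borel"
proof -
  from assms obtain N where N: "\<And>x. \<bar>\<phi> x\<bar> \<le> N * V x" and m: "\<phi> \<in> borel_measurable borel"
    unfolding adm_def by blast
  have "0 \<le> N * V undefined" using N[of undefined] by linarith
  then have "0 \<le> N" using V_pos[of undefined] by (simp add: zero_le_mult_iff)
  with N m that show ?thesis by blast
qed

lemma adm_meas: "\<phi> \<in> adm V \<Longrightarrow> \<phi> \<in> borel_measurable borel" unfolding adm_def by blast

lemma adm_const[simp]: "(\<lambda>_. c) \<in> adm V"
proof (rule admI[where N="\<bar>c\<bar>"])
  fix x show "\<bar>c\<bar> \<le> \<bar>c\<bar> * V x" using V_ge1[of x] by (simp add: mult_le_cancel_left1)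
qed simp

lemma adm_V[simp]: "V \<in> adm V"
  by (rule admI[where N=1]) (use V_meas V_pos in \<open>auto simp: less_imp_le\<close>)

lemma adm_add[simp]: assumes "\<phi> \<in> adm V" "\<psi> \<in> adm V" shows "(\<lambda>x. \<phi> x + \<psi> x) \<in> adm V"
proof -
  obtain N1 where N1: "\<And>x. \<bar>\<phi> x\<bar> \<le> N1 * V x" "\<phi> \<in> borel_measurable borel" using admE[OF assms(1)] by blast
  obtain N2 where N2: "\<And>x. \<bar>\<psi> x\<bar> \<le> N2 * V x" "\<psi> \<in> borel_measurable borel" using admE[OF assms(2)] by blast
  show ?thesis
  proof (rule admI[where N="N1+N2"])
    fix x show "\<bar>\<phi> x + \<psi> x\<bar> \<le> (N1 + N2) * V x" using N1(1)[of x] N2(1)[of x] by (simp add: algebra_simps abs_triangle_ineq order_trans[OF abs_triangle_ineq])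
  qed (use N1 N2 in simp)
qed

lemma adm_scale[simp]: assumes "\<phi> \<in> adm V" shows "(\<lambda>x. c * \<phi> x) \<in> adm V"
proof -
  obtain N1 where N1: "\<And>x. \<bar>\<phi> x\<bar> \<le> N1 * V x" "\<phi> \<in> borel_measurable borel" using admE[OF assms(1)] by blast
  show ?thesis
  proof (rule admI[where N="\<bar>c\<bar>*N1"])
    fix x show "\<bar>c * \<phi> x\<bar> \<le> (\<bar>c\<bar>*N1) * V x" using N1(1)[of x] by (simp add: abs_mult mult.assoc mult_left_mono)
  qed (use N1 in simp)
qed

lemma adm_minus[simp]: "\<phi> \<in> adm V \<Longrightarrow> (\<lambda>x. - \<phi> x) \<in> adm V"
  using adm_scale[of \<phi> "-1"] by simp

lemma adm_diff[simp]: "\<phi> \<in> adm V \<Longrightarrow> \<psi> \<in> adm V \<Longrightarrow> (\<lambda>x. \<phi> x - \<psi> x) \<in> adm V"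
  using adm_add[of \<phi> "\<lambda>x. - \<psi> x"] by simp

lemma adm_bounded: "\<phi> \<in> borel_measurable borel \<Longrightarrow> (\<And>x. \<bar>\<phi> x\<bar> \<le> B) \<Longrightarrow> \<phi> \<in> adm V"
proof (rule admI[where N="\<bar>B\<bar>"])
  fix x assume "\<And>x. \<bar>\<phi> x\<bar> \<le> B"
  then show "\<bar>\<phi> x\<bar> \<le> \<bar>B\<bar> * V x" using V_ge1[of x]
    by (smt (verit, best) mult_le_cancel_left1)
qed

lemma P_minus: "\<phi> \<in> adm V \<Longrightarrow> P (\<lambda>x. - \<phi> x) = (\<lambda>x. - P \<phi> x)"
  using P_scale[of \<phi> "-1"] by simp

lemma P_diff: "\<phi> \<in> adm V \<Longrightarrow> \<psi> \<in> adm V \<Longrightarrow> P (\<lambda>x. \<phi> x - \<psi> x) = (\<lambda>x. P \<phi> x - P \<psi> x)"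
  using P_add[of \<phi> "\<lambda>x. - \<psi> x"] P_minus[of \<psi>] by simp

lemma P_affine: "\<phi> \<in> adm V \<Longrightarrow> P (\<lambda>x. a + b * \<phi> x) = (\<lambda>x. a + b * P \<phi> x)"
  using P_add[of "\<lambda>_. a" "\<lambda>x. b * \<phi> x"] P_scale[of \<phi> b] P_const[of a] by simp

lemma \<nu>_affine: "\<phi> \<in> adm V \<Longrightarrow> \<nu> (\<lambda>x. a + b * \<phi> x) = a + b * \<nu> \<phi>"
  using \<nu>_add[of "\<lambda>_. a" "\<lambda>x. b * \<phi> x"] \<nu>_scale[of \<phi> b] \<nu>_scale[of "\<lambda>_. 1" a] \<nu>_one by simp

lemma P_bound: assumes "\<phi> \<in> adm V" "\<And>x. \<bar>\<phi> x\<bar> \<le> N * V x" shows "\<bar>P \<phi> x\<bar> \<le> N * P V x"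
proof -
  have b: "\<And>y. - (N * V y) \<le> \<phi> y \<and> \<phi> y \<le> N * V y" using assms(2) abs_le_iff by (metis minus_le_iff)
  have "P \<phi> x \<le> P (\<lambda>y. N * V y) x" by (rule P_mono) (use assms b in auto)
  moreover have "P (\<lambda>y. - (N * V y)) x \<le> P \<phi> x" by (rule P_mono) (use assms b in auto)
  ultimately show ?thesis using P_scale[of V N] P_minus[of "\<lambda>y. N * V y"] by auto
qed

lemma PV_le: "P V x \<le> (\<gamma> + K) * V x"
  using drift[of x] V_ge1[of x] K_ge by (smt (verit) distrib_right mult_le_cancel_left1)

lemma P_adm[simp]: assumes "\<phi> \<in> adm V" shows "P \<phi> \<in> adm V"
proof -
  obtain N where N: "0 \<le> N" "\<And>x. \<bar>\<phi> x\<bar> \<le> N * V x" using admE[OF assms] by blast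
  show ?thesis
  proof (rule admI[where N="N*(\<gamma>+K)"])
    fix x have "\<bar>P \<phi> x\<bar> \<le> N * P V x" by (rule P_bound[OF assms N(2)])
    also have "\<dots> \<le> N * ((\<gamma>+K) * V x)" using PV_le N(1) by (simp add: mult_left_mono)
    finally show "\<bar>P \<phi> x\<bar> \<le> N * (\<gamma> + K) * V x" by (simp add: mult.assoc)
  qed (rule P_meas[OF assms])
qed

lemma Pk_adm[simp]: "\<phi> \<in> adm V \<Longrightarrow> (P ^^ k) \<phi> \<in> adm V"
  by (induction k) auto

lemma Pk_const: "(P ^^ k) (\<lambda>_. c) = (\<lambda>_. c)"
  by (induction k) (auto simp: P_const)

lemma Pk_add: "\<phi> \<in> adm V \<Longrightarrow> \<psi> \<in> adm V \<Longrightarrow> (P ^^ k) (\<lambda>x. \<phi> x + \<psi> x) = (\<lambda>x. (P ^^ k) \<phi> x + (P ^^ k) \<psi> x)"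
  by (induction k) (auto simp: P_add)

lemma Pk_scale: "\<phi> \<in> adm V \<Longrightarrow> (P ^^ k) (\<lambda>x. c * \<phi> x) = (\<lambda>x. c * (P ^^ k) \<phi> x)"
  by (induction k) (auto simp: P_scale)

lemma Pk_mono: "\<phi> \<in> adm V \<Longrightarrow> \<psi> \<in> adm V \<Longrightarrow> (\<And>y. \<phi> y \<le> \<psi> y) \<Longrightarrow> (P ^^ k) \<phi> x \<le> (P ^^ k) \<psi> x"
proof (induction k arbitrary: x)
  case (Suc k) then show ?case by (simp add: P_mono)
qed simp


definition "\<beta> = \<epsilon> / (\<gamma>*R + 2*K + 1)"
definition "a = max (1 - \<epsilon>/2) ((4 + \<beta>*R)/(4 + 2*\<beta>*R))"

lemma R_pos: "0 < R" using R_gt K_ge by linarith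

lemma \<beta>_pos: "0 < \<beta>"
proof -
  have "0 \<le> \<gamma>*R" using \<gamma>_ge R_pos by simp
  then show ?thesis unfolding \<beta>_def using \<epsilon>_pos K_ge by (intro divide_pos_pos) auto
qed

lemma \<beta>_small: "\<beta> * (\<gamma>*R + 2*K) \<le> \<epsilon>"
proof -
  have d: "0 < \<gamma>*R + 2*K + 1" using \<gamma>_ge R_pos K_ge by (smt (verit) mult_nonneg_nonneg)
  have "\<beta> * (\<gamma>*R + 2*K) = \<epsilon> * ((\<gamma>*R + 2*K) / (\<gamma>*R + 2*K + 1))" unfolding \<beta>_def by simp
  also have "\<dots> \<le> \<epsilon> * 1" using d \<epsilon>_pos by (intro mult_left_mono) auto
  finally show ?thesis by simp
qed

lemma q_lt1: "(4 + \<beta>*R)/(4 + 2*\<beta>*R) < 1"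
  using \<beta>_pos R_pos by (simp add: divide_less_eq) (smt (verit) mult_pos_pos)

lemma q_pos: "0 < (4 + \<beta>*R)/(4 + 2*\<beta>*R)"
  using \<beta>_pos R_pos by (smt (verit) divide_pos_pos mult_pos_pos)

lemma a_lt1: "a < 1" unfolding a_def using q_lt1 \<epsilon>_pos by auto
lemma a_pos: "0 < a" unfolding a_def using q_pos by auto

lemma arith1:
  assumes u: "R \<le> u" and r: "0 \<le> r"
  shows "r * (2 + \<beta>*(\<gamma> * u + 2*K)) \<le> a * r * (2 + \<beta> * u)"
proof -
  have "\<gamma> * u \<le> u/4" using \<gamma>_le \<gamma>_ge u R_pos by (intro order_trans[OF mult_right_mono[OF \<gamma>_le]]) auto
  moreover have "2*K \<le> u/4" using R_gt u by linarith
  ultimately have "\<beta>*(\<gamma> * u + 2*K) \<le> \<beta>*(u/2)" using \<beta>_pos by (intro mult_left_mono) auto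
  then have 1: "2 + \<beta>*(\<gamma> * u + 2*K) \<le> 2 + \<beta> * u/2" by simp
  define q where "q = (4 + \<beta>*R)/(4 + 2*\<beta>*R)"
  have den: "0 < 4 + 2*\<beta>*R" using \<beta>_pos R_pos by (smt (verit) mult_pos_pos)
  have "(2 + \<beta> * u/2) * (4 + 2*\<beta>*R) \<le> (4 + \<beta>*R) * (2 + \<beta> * u)"
  proof -
    have "2*\<beta>*R \<le> 2*\<beta> * u" using \<beta>_pos u by simp
    then show ?thesis by (simp add: algebra_simps)
  qed
  then have 2: "2 + \<beta> * u/2 \<le> q * (2 + \<beta> * u)" unfolding q_def using den by (simp add: field_simps)
  have "q \<le> a" unfolding q_def a_def by simp
  moreover have "0 \<le> 2 + \<beta> * u" using \<beta>_pos u R_pos by simp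
  ultimately have "q * (2 + \<beta> * u) \<le> a * (2 + \<beta> * u)" by (intro mult_right_mono)
  with 1 2 have "2 + \<beta>*(\<gamma> * u + 2*K) \<le> a * (2 + \<beta> * u)" by linarith
  then show ?thesis using r by (simp add: mult_left_mono mult.assoc mult.left_commute)
qed

lemma arith2:
  assumes u: "u \<le> R" "0 \<le> u" and r: "0 \<le> r"
  shows "r * (2 - 2*\<epsilon> + \<beta>*(\<gamma> * u + 2*K)) \<le> a * r * (2 + \<beta> * u)"
proof -
  have "\<beta>*(\<gamma> * u + 2*K) \<le> \<beta>*(\<gamma>*R + 2*K)" using \<beta>_pos \<gamma>_ge u by (intro mult_left_mono) (auto intro: mult_left_mono)
  with \<beta>_small have "2 - 2*\<epsilon> + \<beta>*(\<gamma> * u + 2*K) \<le> 2 - \<epsilon>" by linarith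
  also have "\<dots> = (1 - \<epsilon>/2) * 2" by (simp add: algebra_simps)
  also have "\<dots> \<le> a * 2" unfolding a_def by (intro mult_right_mono) auto
  also have "\<dots> \<le> a * (2 + \<beta> * u)" using a_pos \<beta>_pos u by simp
  finally show ?thesis using r by (simp add: mult_left_mono mult.assoc mult.left_commute)
qed

definition "D \<phi> r \<longleftrightarrow> (\<forall>x y. \<phi> x - \<phi> y \<le> r * (2 + \<beta>*V x + \<beta>*V y))"

lemma contract:
  assumes \<phi>: "\<phi> \<in> adm V" and r: "0 \<le> r" and D: "D \<phi> r"
  shows "D (P \<phi>) (a * r)"
  unfolding D_def
proof (intro allI)
  fix x y
  have Dxy: "\<And>x y. \<phi> x - \<phi> y \<le> r * (2 + \<beta>*V x + \<beta>*V y)" using D unfolding D_def by blast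
  have pw: "\<And>z w. \<phi> z - r*(1 + \<beta>*V z) \<le> \<phi> w + r*(1 + \<beta>*V w)"
  proof -
    fix z w have "\<phi> z - \<phi> w \<le> r*(2+\<beta>*V z+\<beta>*V w)" by (rule Dxy)
    then show "\<phi> z - r*(1 + \<beta>*V z) \<le> \<phi> w + r*(1 + \<beta>*V w)" unfolding ring_distribs by linarith
  qed
  define c where "c = (SUP z. \<phi> z - r*(1 + \<beta>*V z))"
  have bdd: "bdd_above (range (\<lambda>z. \<phi> z - r*(1 + \<beta>*V z)))"
  proof (rule bdd_aboveI2)
    fix z show "\<phi> z - r*(1 + \<beta>*V z) \<le> \<phi> undefined + r*(1 + \<beta>*V undefined)"
      by (rule pw)
  qed
  have c1: "\<And>z. \<phi> z - r*(1 + \<beta>*V z) \<le> c" unfolding c_def by (rule cSUP_upper[OF UNIV_I bdd])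
  have c2: "\<And>w. c \<le> \<phi> w + r*(1 + \<beta>*V w)" unfolding c_def
    by (rule cSUP_least) (use pw in auto)
  define \<psi> where "\<psi> = (\<lambda>z. \<phi> z - c)"
  have \<psi>: "\<psi> \<in> adm V" unfolding \<psi>_def using \<phi> by simp
  have \<psi>le: "\<And>z. \<psi> z \<le> r + (r*\<beta>) * V z" using c1 unfolding \<psi>_def by (simp add: algebra_simps)
  have \<psi>ge: "\<And>z. (-r) + (-r*\<beta>) * V z \<le> \<psi> z" using c2 unfolding \<psi>_def by (simp add: algebra_simps)
  have P\<psi>: "P \<psi> = (\<lambda>z. P \<phi> z - c)" unfolding \<psi>_def using P_diff[OF \<phi>, of "\<lambda>_. c"] P_const by simp
  have up: "\<And>z. P \<psi> z \<le> r + (r*\<beta>) * P V z"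
  proof -
    fix z have "P \<psi> z \<le> P (\<lambda>z. r + (r*\<beta>) * V z) z" by (rule P_mono) (use \<psi> \<psi>le in auto)
    moreover have "P (\<lambda>z. r + (r*\<beta>) * V z) z = r + (r*\<beta>) * P V z" by (rule fun_cong[OF P_affine[OF adm_V]])
    ultimately show "P \<psi> z \<le> r + (r*\<beta>) * P V z" by linarith
  qed
  have lo: "\<And>z. (-r) + (-r*\<beta>) * P V z \<le> P \<psi> z"
  proof -
    fix z have "P (\<lambda>z. (-r) + (-r*\<beta>) * V z) z \<le> P \<psi> z" by (rule P_mono) (use \<psi> \<psi>ge in auto)
    moreover have "P (\<lambda>z. (-r) + (-r*\<beta>) * V z) z = (-r) + (-r*\<beta>) * P V z" by (rule fun_cong[OF P_affine[OF adm_V]])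
    ultimately show "(-r) + (-r*\<beta>) * P V z \<le> P \<psi> z" by linarith
  qed
  have eq: "P \<phi> x - P \<phi> y = P \<psi> x - P \<psi> y" using P\<psi> by simp
  have rb: "0 \<le> r*\<beta>" using r \<beta>_pos by simp
  have PVx: "r*\<beta> * P V x \<le> r*\<beta> * (\<gamma> * V x + K)" using drift rb by (intro mult_left_mono) auto
  have PVy: "r*\<beta> * P V y \<le> r*\<beta> * (\<gamma> * V y + K)" using drift rb by (intro mult_left_mono) auto
  show "P \<phi> x - P \<phi> y \<le> a * r * (2 + \<beta> * V x + \<beta> * V y)"
  proof (cases "V x + V y \<le> R")
    case False
    have "P \<psi> x - P \<psi> y \<le> r * (2 + \<beta>*(\<gamma>*(V x + V y) + 2*K))"
      using up[of x] lo[of y] PVx PVy by (simp add: algebra_simps)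
    also have "\<dots> \<le> a * r * (2 + \<beta>*(V x + V y))" using False r by (intro arith1) auto
    finally show ?thesis using eq by (simp add: algebra_simps)
  next
    case True
    then have Vx: "V x \<le> R" and Vy: "V y \<le> R" using V_ge1[of x] V_ge1[of y] by linarith+
    define \<psi>1 where "\<psi>1 = (\<lambda>z. r + (r*\<beta>) * V z - \<psi> z)"
    define \<psi>2 where "\<psi>2 = (\<lambda>z. r + (r*\<beta>) * V z + \<psi> z)"
    have a1: "\<psi>1 \<in> adm V" "\<psi>2 \<in> adm V" unfolding \<psi>1_def \<psi>2_def using \<psi> by simp_all
    have m1: "\<epsilon> * \<nu> \<psi>1 \<le> P \<psi>1 x" by (rule minor[OF a1(1) _ Vx]) (use \<psi>le in \<open>simp add: \<psi>1_def\<close>)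
    have m2: "\<epsilon> * \<nu> \<psi>2 \<le> P \<psi>2 y" by (rule minor[OF a1(2) _ Vy]) (unfold \<psi>2_def, smt (verit, best) \<psi>ge mult_minus_left)
    have P1: "P \<psi>1 x = r + (r*\<beta>) * P V x - P \<psi> x"
      unfolding \<psi>1_def using P_diff[OF _ \<psi>, of "\<lambda>z. r + (r*\<beta>) * V z"] P_affine[OF adm_V] by simp
    have P2: "P \<psi>2 y = r + (r*\<beta>) * P V y + P \<psi> y"
      unfolding \<psi>2_def using P_add[OF _ \<psi>, of "\<lambda>z. r + (r*\<beta>) * V z"] P_affine[OF adm_V] by simp
    have "\<nu> \<psi>1 + \<nu> \<psi>2 = \<nu> (\<lambda>z. \<psi>1 z + \<psi>2 z)" using \<nu>_add[OF a1] by simp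
    also have "(\<lambda>z. \<psi>1 z + \<psi>2 z) = (\<lambda>z. 2*r + (2*r*\<beta>) * V z)" unfolding \<psi>1_def \<psi>2_def by (auto simp: algebra_simps)
    also have "\<nu> \<dots> = 2*r + (2*r*\<beta>) * \<nu> V" by (rule \<nu>_affine[OF adm_V])
    finally have "\<nu> \<psi>1 + \<nu> \<psi>2 \<ge> 2*r" using \<nu>_V rb by simp
    then have "\<epsilon> * (\<nu> \<psi>1 + \<nu> \<psi>2) \<ge> \<epsilon> * (2*r)" using \<epsilon>_pos by (intro mult_left_mono) auto
    then have "P \<psi> x - P \<psi> y \<le> 2*r + r*\<beta>*(P V x + P V y) - 2*\<epsilon>*r"
      using m1 m2 P1 P2 by (simp add: algebra_simps)
    also have "\<dots> \<le> r * (2 - 2*\<epsilon> + \<beta>*(\<gamma>*(V x + V y) + 2*K))"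
      using PVx PVy by (simp add: algebra_simps)
    also have "\<dots> \<le> a * r * (2 + \<beta>*(V x + V y))"
      using True r V_ge1[of x] V_ge1[of y] by (intro arith2) auto
    finally show ?thesis using eq by (simp add: algebra_simps)
  qed
qed


lemma D_mono_r: "D \<phi> r \<Longrightarrow> r \<le> r' \<Longrightarrow> D \<phi> r'"
proof -
  assume D: "D \<phi> r" and rr: "r \<le> r'"
  have "0 \<le> 2 + \<beta>*V x + \<beta>*V y" for x y using \<beta>_pos V_pos[of x] V_pos[of y] by (smt (verit) mult_pos_pos)
  then show "D \<phi> r'" using D rr unfolding D_def by (meson mult_right_mono order_trans)
qed

lemma D_nonneg: "D \<phi> r \<Longrightarrow> 0 \<le> r"
proof -
  assume "D \<phi> r"
  then have "\<phi> undefined - \<phi> undefined \<le> r * (2 + \<beta>*V undefined + \<beta>*V undefined)" unfolding D_def by blast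
  then have "0 \<le> r * (2 + \<beta>*V undefined + \<beta>*V undefined)" by simp
  moreover have "0 < 2 + \<beta>*V undefined + \<beta>*V undefined" using \<beta>_pos V_pos by (smt (verit) mult_pos_pos)
  ultimately show "0 \<le> r" by (simp add: zero_le_mult_iff)
qed

lemma D_of_bound:
  assumes "\<And>x. \<bar>\<phi> x - c\<bar> \<le> M * V x"
  shows "D \<phi> (M / \<beta>)"
  unfolding D_def
proof (intro allI)
  fix x y
  have "0 \<le> M * V x" using assms[of x] by linarith
  then have M: "0 \<le> M" using V_pos[of x] by (simp add: zero_le_mult_iff)
  have "\<phi> x - \<phi> y \<le> M * V x + M * V y" using assms[of x] assms[of y] by linarith
  also have "\<dots> = (M / \<beta>) * (\<beta>*V x + \<beta>*V y)" using \<beta>_pos by (simp add: field_simps)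
  also have "\<dots> \<le> (M / \<beta>) * (2 + \<beta>*V x + \<beta>*V y)" using M \<beta>_pos by (intro mult_left_mono) auto
  finally show "\<phi> x - \<phi> y \<le> M / \<beta> * (2 + \<beta> * V x + \<beta> * V y)" .
qed

lemma adm_D: assumes "\<phi> \<in> adm V" obtains r where "D \<phi> r"
proof -
  obtain N where "\<And>x. \<bar>\<phi> x\<bar> \<le> N * V x" using admE[OF assms] by blast
  then have "D \<phi> (N / \<beta>)" by (intro D_of_bound[where c=0]) simp
  then show ?thesis using that by blast
qed

lemma Dk: assumes "\<phi> \<in> adm V" "D \<phi> r" shows "D ((P ^^ k) \<phi>) (a^k * r)"
proof (induction k)
  case 0 then show ?case using assms by simp
next
  case (Suc k)
  have "D (P ((P ^^ k) \<phi>)) (a * (a^k * r))"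
    by (rule contract[OF Pk_adm[OF assms(1)] _ Suc]) (use D_nonneg[OF assms(2)] a_pos in simp)
  then show ?case by (simp add: mult.assoc)
qed

definition "C1 = 2 + \<beta> * (1 + \<gamma> + K)"

lemma C1_pos: "0 < C1" unfolding C1_def using \<beta>_pos \<gamma>_ge K_ge by (smt (verit) mult_nonneg_nonneg)

lemma one_step:
  assumes \<psi>: "\<psi> \<in> adm V" and D: "D \<psi> \<rho>"
  shows "\<bar>P \<psi> x - \<psi> x\<bar> \<le> \<rho> * C1 * V x"
proof -
  have \<rho>: "0 \<le> \<rho>" by (rule D_nonneg[OF D])
  have Dz: "\<And>z. \<psi> z - \<psi> x \<le> \<rho> * (2 + \<beta>*V x) + (\<rho>*\<beta>) * V z"
  proof -
    fix z have "\<psi> z - \<psi> x \<le> \<rho> * (2 + \<beta>*V z + \<beta>*V x)" using D unfolding D_def by blast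
    moreover have "\<rho> * (2 + \<beta>*V z + \<beta>*V x) = \<rho> * (2 + \<beta>*V x) + (\<rho>*\<beta>) * V z" by (simp add: algebra_simps)
    ultimately show "\<psi> z - \<psi> x \<le> \<rho> * (2 + \<beta>*V x) + (\<rho>*\<beta>) * V z" by linarith
  qed
  have Dz': "\<And>z. -(\<rho> * (2 + \<beta>*V x)) + (-(\<rho>*\<beta>)) * V z \<le> \<psi> z - \<psi> x"
  proof -
    fix z have "\<psi> x - \<psi> z \<le> \<rho> * (2 + \<beta>*V x + \<beta>*V z)" using D unfolding D_def by blast
    moreover have "\<rho> * (2 + \<beta>*V x + \<beta>*V z) = \<rho> * (2 + \<beta>*V x) + (\<rho>*\<beta>) * V z" by (simp add: algebra_simps)
    ultimately have "\<psi> x - \<psi> z \<le> \<rho> * (2 + \<beta>*V x) + (\<rho>*\<beta>) * V z" by linarith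
    then show "-(\<rho> * (2 + \<beta>*V x)) + (-(\<rho>*\<beta>)) * V z \<le> \<psi> z - \<psi> x" by simp
  qed
  have eqP: "P (\<lambda>z. \<psi> z - \<psi> x) x = P \<psi> x - \<psi> x"
    using P_diff[OF \<psi>, of "\<lambda>_. \<psi> x"] P_const by simp
  have "P (\<lambda>z. \<psi> z - \<psi> x) x \<le> P (\<lambda>z. \<rho> * (2 + \<beta>*V x) + (\<rho>*\<beta>) * V z) x"
    by (rule P_mono) (use \<psi> Dz in auto)
  also have "\<dots> = \<rho> * (2 + \<beta>*V x) + (\<rho>*\<beta>) * P V x" by (rule fun_cong[OF P_affine[OF adm_V]])
  finally have up: "P \<psi> x - \<psi> x \<le> \<rho> * (2 + \<beta>*V x) + (\<rho>*\<beta>) * P V x" using eqP by simp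
  have "P (\<lambda>z. -(\<rho> * (2 + \<beta>*V x)) + (-(\<rho>*\<beta>)) * V z) x \<le> P (\<lambda>z. \<psi> z - \<psi> x) x"
    by (rule P_mono) (use \<psi> Dz' in auto)
  moreover have "P (\<lambda>z. -(\<rho> * (2 + \<beta>*V x)) + (-(\<rho>*\<beta>)) * V z) x = -(\<rho> * (2 + \<beta>*V x)) + (-(\<rho>*\<beta>)) * P V x"
    by (rule fun_cong[OF P_affine[OF adm_V]])
  ultimately have lo: "-(\<rho> * (2 + \<beta>*V x)) - (\<rho>*\<beta>) * P V x \<le> P \<psi> x - \<psi> x" using eqP by simp
  have "(\<rho>*\<beta>) * P V x \<le> (\<rho>*\<beta>) * ((\<gamma> + K) * V x)" using PV_le \<rho> \<beta>_pos by (intro mult_left_mono) auto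
  moreover have "\<rho> * 2 \<le> \<rho> * 2 * V x" using \<rho> V_ge1[of x] by (simp add: mult_le_cancel_left1)
  ultimately have "\<rho> * (2 + \<beta>*V x) + (\<rho>*\<beta>) * P V x \<le> \<rho> * C1 * V x"
    unfolding C1_def by (simp add: algebra_simps)
  with up lo show ?thesis by linarith
qed

definition "L \<phi> = lim (\<lambda>k. (P ^^ k) \<phi> undefined)"

lemma L_main:
  assumes \<phi>: "\<phi> \<in> adm V" and D: "D \<phi> r"
  shows "(\<lambda>k. (P ^^ k) \<phi> x) \<longlonglongrightarrow> L \<phi>"
    and "\<bar>(P ^^ k) \<phi> x - L \<phi>\<bar> \<le> r * C1 * V x * a^k / (1 - a)"
proof -
  have step: "\<bar>(P ^^ Suc k) \<phi> y - (P ^^ k) \<phi> y\<bar> \<le> (r * C1 * V y) * a^k" for k y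
    using one_step[OF Pk_adm[OF \<phi>] Dk[OF \<phi> D, of k], of y] by (simp add: mult_ac)
  note G = geom_conv[where s="\<lambda>k. (P ^^ k) \<phi> y" for y, OF step a_pos a_lt1]
  have conv: "(\<lambda>k. (P ^^ k) \<phi> y) \<longlonglongrightarrow> lim (\<lambda>k. (P ^^ k) \<phi> y)" for y
    using G(1) by (simp add: convergent_LIMSEQ_iff)
  have same: "lim (\<lambda>k. (P ^^ k) \<phi> y) = L \<phi>" for y
  proof -
    have "(\<lambda>k. (P ^^ k) \<phi> y - (P ^^ k) \<phi> undefined) \<longlonglongrightarrow> lim (\<lambda>k. (P ^^ k) \<phi> y) - L \<phi>"
      unfolding L_def by (intro tendsto_intros conv)
    moreover have "(\<lambda>k. (P ^^ k) \<phi> y - (P ^^ k) \<phi> undefined) \<longlonglongrightarrow> 0"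
    proof (rule tendsto_sandwich[where f="\<lambda>k. - (a^k * (r * (2 + \<beta>*V y + \<beta>*V undefined)))"
                                   and h="\<lambda>k. a^k * (r * (2 + \<beta>*V y + \<beta>*V undefined))"])
      have "D ((P ^^ k) \<phi>) (a^k * r)" for k by (rule Dk[OF \<phi> D])
      then have "(P ^^ k) \<phi> y - (P ^^ k) \<phi> undefined \<le> a^k * r * (2 + \<beta>*V y + \<beta>*V undefined)"
        and "(P ^^ k) \<phi> undefined - (P ^^ k) \<phi> y \<le> a^k * r * (2 + \<beta>*V undefined + \<beta>*V y)" for k
        unfolding D_def by blast+
      then show "\<forall>\<^sub>F k in sequentially. - (a^k * (r * (2 + \<beta>*V y + \<beta>*V undefined))) \<le> (P ^^ k) \<phi> y - (P ^^ k) \<phi> undefined"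
        and "\<forall>\<^sub>F k in sequentially. (P ^^ k) \<phi> y - (P ^^ k) \<phi> undefined \<le> a^k * (r * (2 + \<beta>*V y + \<beta>*V undefined))"
        by (auto simp: algebra_simps)
      show "(\<lambda>k. a^k * (r * (2 + \<beta>*V y + \<beta>*V undefined))) \<longlonglongrightarrow> 0"
        using a_pos a_lt1 by (intro tendsto_mult_left_zero LIMSEQ_power_zero) auto
      then show "(\<lambda>k. - (a^k * (r * (2 + \<beta>*V y + \<beta>*V undefined)))) \<longlonglongrightarrow> 0"
        using tendsto_minus by fastforce
    qed
    ultimately show ?thesis using LIMSEQ_unique by fastforce
  qed
  show "(\<lambda>k. (P ^^ k) \<phi> x) \<longlonglongrightarrow> L \<phi>" using conv[of x] same[of x] by simp
  show "\<bar>(P ^^ k) \<phi> x - L \<phi>\<bar> \<le> r * C1 * V x * a^k / (1 - a)"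
    using G(2)[of x k] same[of x] by (simp add: abs_minus_commute)
qed

lemma L_conv: "\<phi> \<in> adm V \<Longrightarrow> (\<lambda>k. (P ^^ k) \<phi> x) \<longlonglongrightarrow> L \<phi>"
  by (metis adm_D L_main(1))

lemma L_add: "\<phi> \<in> adm V \<Longrightarrow> \<psi> \<in> adm V \<Longrightarrow> L (\<lambda>x. \<phi> x + \<psi> x) = L \<phi> + L \<psi>"
  using L_conv[of "\<lambda>x. \<phi> x + \<psi> x" undefined] tendsto_add[OF L_conv[of \<phi> undefined] L_conv[of \<psi> undefined]]
  by (simp add: Pk_add LIMSEQ_unique)

lemma L_scale: "\<phi> \<in> adm V \<Longrightarrow> L (\<lambda>x. c * \<phi> x) = c * L \<phi>"
  using L_conv[of "\<lambda>x. c * \<phi> x" undefined] tendsto_mult_left[OF L_conv[of \<phi> undefined], of c]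
  by (simp add: Pk_scale LIMSEQ_unique)

lemma L_const: "L (\<lambda>_. c) = c"
  using L_conv[of "\<lambda>_. c" undefined] by (simp add: Pk_const LIMSEQ_unique)

lemma L_mono: "\<phi> \<in> adm V \<Longrightarrow> \<psi> \<in> adm V \<Longrightarrow> (\<And>y. \<phi> y \<le> \<psi> y) \<Longrightarrow> L \<phi> \<le> L \<psi>"
  by (rule LIMSEQ_le[OF L_conv L_conv]) (auto intro: Pk_mono)

lemma L_P: "\<phi> \<in> adm V \<Longrightarrow> L (P \<phi>) = L \<phi>"
proof -
  assume \<phi>: "\<phi> \<in> adm V"
  have "(\<lambda>k. (P ^^ Suc k) \<phi> undefined) \<longlonglongrightarrow> L \<phi>" using LIMSEQ_Suc[OF L_conv[OF \<phi>]] .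
  moreover have "(\<lambda>k. (P ^^ Suc k) \<phi> undefined) = (\<lambda>k. (P ^^ k) (P \<phi>) undefined)"
    by (simp add: funpow_Suc_right del: funpow.simps)
  ultimately show ?thesis using L_conv[of "P \<phi>" undefined] \<phi> by (simp add: LIMSEQ_unique)
qed

lemma L_bound: "\<phi> \<in> adm V \<Longrightarrow> (\<And>y. \<bar>\<phi> y\<bar> \<le> B) \<Longrightarrow> \<bar>L \<phi>\<bar> \<le> B"
proof -
  assume \<phi>: "\<phi> \<in> adm V" and b: "\<And>y. \<bar>\<phi> y\<bar> \<le> B"
  have b1: "\<phi> y \<le> B" and b2: "-B \<le> \<phi> y" for y using b[of y] by linarith+
  have "L \<phi> \<le> L (\<lambda>_. B)" using b1 \<phi> by (intro L_mono) auto
  moreover have "L (\<lambda>_. -B) \<le> L \<phi>" using b2 \<phi> by (intro L_mono) auto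
  ultimately show ?thesis by (simp add: L_const)
qed

end


lemma functional_eq:
  fixes F G :: "('a::topological_space \<Rightarrow> real) \<Rightarrow> real" and \<psi> :: "'a \<Rightarrow> real"
  assumes F_add: "\<And>f g. f \<in> borel_measurable borel \<Longrightarrow> g \<in> borel_measurable borel \<Longrightarrow> bounded (range f) \<Longrightarrow> bounded (range g)
        \<Longrightarrow> F (\<lambda>x. f x + g x) = F f + F g"
    and F_scale: "\<And>f c. f \<in> borel_measurable borel \<Longrightarrow> bounded (range f) \<Longrightarrow> F (\<lambda>x. c * f x) = c * F f"
    and F_bd: "\<And>f B. f \<in> borel_measurable borel \<Longrightarrow> (\<And>x. \<bar>f x\<bar> \<le> B) \<Longrightarrow> \<bar>F f\<bar> \<le> B"
    and G_add: "\<And>f g. f \<in> borel_measurable borel \<Longrightarrow> g \<in> borel_measurable borel \<Longrightarrow> bounded (range f) \<Longrightarrow> bounded (range g)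
        \<Longrightarrow> G (\<lambda>x. f x + g x) = G f + G g"
    and G_scale: "\<And>f c. f \<in> borel_measurable borel \<Longrightarrow> bounded (range f) \<Longrightarrow> G (\<lambda>x. c * f x) = c * G f"
    and G_bd: "\<And>f B. f \<in> borel_measurable borel \<Longrightarrow> (\<And>x. \<bar>f x\<bar> \<le> B) \<Longrightarrow> \<bar>G f\<bar> \<le> B"
    and agree: "\<And>A. A \<in> sets borel \<Longrightarrow> F (indicator A) = G (indicator A)"
    and \<psi>m: "\<psi> \<in> borel_measurable borel" and \<psi>b: "\<And>x. \<bar>\<psi> x\<bar> \<le> B"
  shows "F \<psi> = G \<psi>"
proof -
  have bdd_iff: "bounded (range f) \<longleftrightarrow> (\<exists>B. \<forall>x. \<bar>f x\<bar> \<le> B)" for f :: "'a \<Rightarrow> real"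
    unfolding bounded_iff by auto
  have ind_m: "indicator A \<in> borel_measurable borel" if "A \<in> sets borel" for A :: "'a set"
    using that by simp
  have ind_b: "bounded (range (indicator A :: 'a \<Rightarrow> real))" for A :: "'a set"
    unfolding bdd_iff by (rule exI[of _ 1]) (simp add: indicator_def)
  have all: "(\<forall>j\<in>S. E j \<in> sets borel) \<longrightarrow>
      F (\<lambda>x. \<Sum>j\<in>S. c j * indicator (E j) x) = (\<Sum>j\<in>S. c j * F (indicator (E j))) \<and>
      G (\<lambda>x. \<Sum>j\<in>S. c j * indicator (E j) x) = (\<Sum>j\<in>S. c j * G (indicator (E j))) \<and>
      (\<lambda>x. \<Sum>j\<in>S. c j * indicator (E j) x) \<in> borel_measurable borel \<and>
      bounded (range (\<lambda>x. \<Sum>j\<in>S. c j * indicator (E j) x))"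
    if "finite S" for S :: "int set" and c E
    using that
  proof (induction S rule: finite_induct)
    case empty
    have F0: "F (\<lambda>x. 0) = 0" using F_scale[of "\<lambda>_. 0" 0] by (simp add: bdd_iff)
    have G0: "G (\<lambda>x. 0) = 0" using G_scale[of "\<lambda>_. 0" 0] by (simp add: bdd_iff)
    show ?case using F0 G0 by (simp add: bdd_iff)
  next
    case (insert j S)
    show ?case
    proof
      assume pr: "\<forall>i\<in>insert j S. E i \<in> sets borel"
      have Ej: "E j \<in> sets borel" using pr by simp
      have "\<forall>i\<in>S. E i \<in> sets borel" using pr by simp
      then have IH: "F (\<lambda>x. \<Sum>j\<in>S. c j * indicator (E j) x) = (\<Sum>j\<in>S. c j * F (indicator (E j)))"
        "G (\<lambda>x. \<Sum>j\<in>S. c j * indicator (E j) x) = (\<Sum>j\<in>S. c j * G (indicator (E j)))"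
        "(\<lambda>x. \<Sum>j\<in>S. c j * indicator (E j) x) \<in> borel_measurable borel"
        "bounded (range (\<lambda>x. \<Sum>j\<in>S. c j * indicator (E j) x))" using insert.IH by blast+
      have m1: "(\<lambda>x. c j * indicator (E j) x) \<in> borel_measurable borel" using Ej by simp
      have b1: "bounded (range (\<lambda>x. c j * indicator (E j) x :: real))"
        unfolding bdd_iff by (rule exI[of _ "\<bar>c j\<bar>"]) (simp add: indicator_def)
      have eq: "(\<lambda>x. \<Sum>j\<in>insert j S. c j * indicator (E j) x) = (\<lambda>x. c j * indicator (E j) x + (\<Sum>j\<in>S. c j * indicator (E j) x))"
        by (rule ext) (simp only: sum.insert[OF insert(1) insert(2)])
      have sins: "(\<Sum>j\<in>insert j S. c j * H (indicator (E j))) = c j * H (indicator (E j)) + (\<Sum>j\<in>S. c j * H (indicator (E j)))" for H :: "('a \<Rightarrow> real) \<Rightarrow> real"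
        by (rule sum.insert[OF insert(1) insert(2)])
      have "F (\<lambda>x. c j * indicator (E j) x + (\<Sum>j\<in>S. c j * indicator (E j) x)) = F (\<lambda>x. c j * indicator (E j) x) + F (\<lambda>x. \<Sum>j\<in>S. c j * indicator (E j) x)"
        by (rule F_add[OF m1 IH(3) b1 IH(4)])
      also have "\<dots> = c j * F (indicator (E j)) + (\<Sum>j\<in>S. c j * F (indicator (E j)))"
        by (simp only: F_scale[OF ind_m[OF Ej] ind_b] IH(1))
      finally have 1: "F (\<lambda>x. \<Sum>j\<in>insert j S. c j * indicator (E j) x) = (\<Sum>j\<in>insert j S. c j * F (indicator (E j)))"
        unfolding eq sins .
      have "G (\<lambda>x. c j * indicator (E j) x + (\<Sum>j\<in>S. c j * indicator (E j) x)) = G (\<lambda>x. c j * indicator (E j) x) + G (\<lambda>x. \<Sum>j\<in>S. c j * indicator (E j) x)"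
        by (rule G_add[OF m1 IH(3) b1 IH(4)])
      also have "\<dots> = c j * G (indicator (E j)) + (\<Sum>j\<in>S. c j * G (indicator (E j)))"
        by (simp only: G_scale[OF ind_m[OF Ej] ind_b] IH(2))
      finally have 2: "G (\<lambda>x. \<Sum>j\<in>insert j S. c j * indicator (E j) x) = (\<Sum>j\<in>insert j S. c j * G (indicator (E j)))"
        unfolding eq sins .
      have 3: "(\<lambda>x. \<Sum>j\<in>insert j S. c j * indicator (E j) x) \<in> borel_measurable borel"
        unfolding eq using m1 IH(3) by (rule borel_measurable_add)
      obtain B1 where B1: "\<And>x. \<bar>c j * indicator (E j) x\<bar> \<le> B1" using b1 unfolding bdd_iff by blast
      obtain B2 where B2: "\<And>x. \<bar>\<Sum>j\<in>S. c j * indicator (E j) x\<bar> \<le> B2" using IH(4) unfolding bdd_iff by blast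
      have "\<bar>c j * indicator (E j) x + (\<Sum>j\<in>S. c j * indicator (E j) x)\<bar> \<le> B1 + B2" for x
        using B1[of x] B2[of x] by linarith
      then have 4: "bounded (range (\<lambda>x. \<Sum>j\<in>insert j S. c j * indicator (E j) x))"
        unfolding eq bdd_iff by blast
      show "F (\<lambda>x. \<Sum>j\<in>insert j S. c j * indicator (E j) x) = (\<Sum>j\<in>insert j S. c j * F (indicator (E j))) \<and>
      G (\<lambda>x. \<Sum>j\<in>insert j S. c j * indicator (E j) x) = (\<Sum>j\<in>insert j S. c j * G (indicator (E j))) \<and>
      (\<lambda>x. \<Sum>j\<in>insert j S. c j * indicator (E j) x) \<in> borel_measurable borel \<and>
      bounded (range (\<lambda>x. \<Sum>j\<in>insert j S. c j * indicator (E j) x))" using 1 2 3 4 by blast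
    qed
  qed
  have sumF: "F (\<lambda>x. \<Sum>j\<in>S. c j * indicator (E j) x) = (\<Sum>j\<in>S. c j * F (indicator (E j)))"
    and sumG: "G (\<lambda>x. \<Sum>j\<in>S. c j * indicator (E j) x) = (\<Sum>j\<in>S. c j * G (indicator (E j)))"
    and sum_m: "(\<lambda>x. \<Sum>j\<in>S. c j * indicator (E j) x) \<in> borel_measurable borel"
    and sum_b: "bounded (range (\<lambda>x. \<Sum>j\<in>S. c j * indicator (E j) x))"
    if "finite S" "\<And>j. j \<in> S \<Longrightarrow> E j \<in> sets borel" for S :: "int set" and c E
    using all[OF that(1), of E c] that(2) by blast+
  have approx: "\<bar>F \<psi> - G \<psi>\<bar> \<le> 2 / real (Suc n)" for n
  proof -
    define m where "m = real (Suc n)"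
    have m: "0 < m" unfolding m_def by simp
    define M where "M = \<lceil>m * \<bar>B\<bar>\<rceil> + 1"
    define E where "E j = {y. real_of_int j \<le> m * \<psi> y \<and> m * \<psi> y < real_of_int j + 1}" for j :: int
    have Em: "E j \<in> sets borel" for j
    proof -
      have "E j = (\<lambda>y. m * \<psi> y) -` {real_of_int j ..< real_of_int j + 1}" unfolding E_def by auto
      also have "\<dots> \<in> sets borel"
        using measurable_sets_borel[of "\<lambda>y. m * \<psi> y" borel "{real_of_int j ..< real_of_int j + 1}"] \<psi>m by simp
      finally show ?thesis .
    qed
    define s where "s x = (\<Sum>j\<in>{-M..M}. (real_of_int j / m) * indicator (E j) x)" for x
    have ind: "indicator (E j) x = (if \<lfloor>m * \<psi> x\<rfloor> = j then 1 else (0::real))" for j x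
      unfolding E_def indicator_def by (auto simp: floor_eq_iff)
    have inS: "\<lfloor>m * \<psi> x\<rfloor> \<in> {-M..M}" for x
    proof -
      have "\<bar>m * \<psi> x\<bar> \<le> m * \<bar>B\<bar>" using \<psi>b[of x] m by (simp add: abs_mult mult_left_mono order_trans[OF _ abs_ge_self])
      moreover have "m * \<bar>B\<bar> \<le> real_of_int \<lceil>m * \<bar>B\<bar>\<rceil>" by (rule le_of_int_ceiling)
      ultimately show ?thesis unfolding M_def by (auto simp: abs_le_iff) linarith+
    qed
    have s_eq: "s x = real_of_int \<lfloor>m * \<psi> x\<rfloor> / m" for x
    proof -
      have "s x = (\<Sum>j\<in>{-M..M}. if j = \<lfloor>m * \<psi> x\<rfloor> then real_of_int j / m else 0)"
        unfolding s_def ind by (intro sum.cong) auto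
      also have "\<dots> = real_of_int \<lfloor>m * \<psi> x\<rfloor> / m" using inS[of x] by (simp add: sum.delta')
      finally show ?thesis .
    qed
    have Fs: "F s = G s"
    proof -
      have "F s = (\<Sum>j\<in>{-M..M}. (real_of_int j / m) * F (indicator (E j)))"
        unfolding s_def[abs_def] by (rule sumF) (auto intro: Em)
      also have "\<dots> = (\<Sum>j\<in>{-M..M}. (real_of_int j / m) * G (indicator (E j)))"
        using agree[OF Em] by simp
      also have "\<dots> = G s"
        unfolding s_def[abs_def] by (rule sumG[symmetric]) (auto intro: Em)
      finally show ?thesis .
    qed
    have sm: "s \<in> borel_measurable borel" unfolding s_def[abs_def] by (rule sum_m) (auto intro: Em)
    have sb: "bounded (range s)" unfolding s_def[abs_def] by (rule sum_b) (auto intro: Em)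
    define d where "d x = \<psi> x - s x" for x
    have dm: "d \<in> borel_measurable borel" unfolding d_def[abs_def] using sm \<psi>m by simp
    have dle: "\<bar>d x\<bar> \<le> 1 / m" for x
    proof -
      have "real_of_int \<lfloor>m * \<psi> x\<rfloor> \<le> m * \<psi> x" "m * \<psi> x < real_of_int \<lfloor>m * \<psi> x\<rfloor> + 1" by linarith+
      then have "0 \<le> m * \<psi> x - real_of_int \<lfloor>m * \<psi> x\<rfloor>" "m * \<psi> x - real_of_int \<lfloor>m * \<psi> x\<rfloor> \<le> 1" by linarith+
      moreover have "d x = (m * \<psi> x - real_of_int \<lfloor>m * \<psi> x\<rfloor>) / m" unfolding d_def s_eq using m by (simp add: field_simps)
      ultimately show ?thesis using m by (simp add: divide_right_mono)
    qed
    have db: "bounded (range d)" unfolding bdd_iff using dle by blast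
    have \<psi>eq: "\<psi> = (\<lambda>x. s x + d x)" unfolding d_def by simp
    have "F \<psi> = F s + F d" "G \<psi> = G s + G d" unfolding \<psi>eq using F_add[OF sm dm sb db] G_add[OF sm dm sb db] by auto
    moreover have "\<bar>F d\<bar> \<le> 1/m" "\<bar>G d\<bar> \<le> 1/m" using F_bd[OF dm dle] G_bd[OF dm dle] by auto
    ultimately have "\<bar>F \<psi> - G \<psi>\<bar> \<le> 2/m" using Fs by linarith
    then show ?thesis unfolding m_def .
  qed
  show ?thesis
  proof (rule ccontr)
    assume "F \<psi> \<noteq> G \<psi>"
    then have pos: "0 < \<bar>F \<psi> - G \<psi>\<bar> / 2" by simp
    obtain n where "inverse (real (Suc n)) < \<bar>F \<psi> - G \<psi>\<bar> / 2" using reals_Archimedean[OF pos] by blast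
    with approx[of n] show False by (simp add: field_simps)
  qed
qed


lemma prob_bounded:
  fixes M :: "'a::topological_space measure" and \<psi> :: "'a \<Rightarrow> real" and B :: real
  assumes "prob_space M" "sets M = sets borel" "\<psi> \<in> borel_measurable borel" "\<And>x. \<bar>\<psi> x\<bar> \<le> B"
  shows "integrable M \<psi>" "\<bar>\<integral>x. \<psi> x \<partial>M\<bar> \<le> B"
proof -
  interpret prob_space M by fact
  have m: "\<psi> \<in> borel_measurable M" by (subst measurable_cong_sets[OF assms(2) refl]) (rule assms(3))
  show i: "integrable M \<psi>" by (rule integrable_const_bound[where B=B]) (use assms(4) m in auto)
  have "\<bar>\<integral>x. \<psi> x \<partial>M\<bar> \<le> (\<integral>x. \<bar>\<psi> x\<bar> \<partial>M)" by (rule integral_abs_bound)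
  also have "\<dots> \<le> (\<integral>x. B \<partial>M)" using i assms(4) by (intro integral_mono) auto
  also have "\<dots> = B" by (simp add: prob_space)
  finally show "\<bar>\<integral>x. \<psi> x \<partial>M\<bar> \<le> B" .
qed

lemma bounded_range_iff: "bounded (range f) \<longleftrightarrow> (\<exists>B. \<forall>x. \<bar>f x :: real\<bar> \<le> B)"
  unfolding bounded_iff by auto

context harris begin

lemma ind_adm[simp]: "A \<in> sets borel \<Longrightarrow> indicator A \<in> adm V"
  by (rule adm_bounded[where B=1]) (auto simp: indicator_def)

lemma bnd_adm: "\<psi> \<in> borel_measurable borel \<Longrightarrow> bounded (range \<psi>) \<Longrightarrow> \<psi> \<in> adm V"
  unfolding bounded_range_iff using adm_bounded by blast

lemma P_bnd: assumes "\<psi> \<in> adm V" "\<And>y. \<bar>\<psi> y\<bar> \<le> B" shows "\<bar>P \<psi> x\<bar> \<le> B"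
proof -
  have b1: "\<psi> y \<le> B" and b2: "-B \<le> \<psi> y" for y using assms(2)[of y] by linarith+
  have "P \<psi> x \<le> P (\<lambda>_. B) x" using b1 assms by (intro P_mono) auto
  moreover have "P (\<lambda>_. -B) x \<le> P \<psi> x" using b2 assms by (intro P_mono) auto
  ultimately show ?thesis by (simp add: P_const)
qed

lemma Pk_bound: assumes "\<phi> \<in> adm V" "\<And>y. \<bar>\<phi> y\<bar> \<le> N * V y" "0 \<le> N"
  shows "\<bar>(P ^^ k) \<phi> x\<bar> \<le> N * (\<gamma> + K)^k * V x"
  using assms(2,3)
proof (induction k arbitrary: x N)
  case 0 then show ?case by simp
next
  case (Suc k)
  have IH: "\<And>y. \<bar>(P ^^ k) \<phi> y\<bar> \<le> (N * (\<gamma> + K)^k) * V y" using Suc by blast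
  have "\<bar>P ((P ^^ k) \<phi>) x\<bar> \<le> (N * (\<gamma> + K)^k) * P V x" by (rule P_bound[OF Pk_adm[OF assms(1)] IH])
  also have "\<dots> \<le> (N * (\<gamma> + K)^k) * ((\<gamma> + K) * V x)" using PV_le Suc.prems(2) \<gamma>_ge K_ge
    by (intro mult_left_mono) auto
  finally show ?case by (simp add: mult_ac)
qed

lemma Pk_conv: assumes "\<And>n. \<phi>s n \<in> adm V" "\<phi> \<in> adm V" "\<And>n y. \<bar>\<phi>s n y\<bar> \<le> N * V y" "0 \<le> N"
    "\<And>y. (\<lambda>n. \<phi>s n y) \<longlonglongrightarrow> \<phi> y"
  shows "(\<lambda>n. (P ^^ k) (\<phi>s n) x) \<longlonglongrightarrow> (P ^^ k) \<phi> x"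
proof (induction k arbitrary: x)
  case 0 then show ?case using assms(5) by simp
next
  case (Suc k)
  show ?case
    using P_conv[of "\<lambda>n. (P ^^ k) (\<phi>s n)" "(P ^^ k) \<phi>" "N * (\<gamma> + K)^k" x]
      assms(1,2) Pk_bound[OF assms(1) assms(3) assms(4)] Suc by simp
qed

lemma L_tail:
  assumes B: "\<And>n. B n \<in> sets borel" and lim: "\<And>y. (\<lambda>n. indicator (B n) y :: real) \<longlonglongrightarrow> 0"
  shows "(\<lambda>n. L (indicator (B n))) \<longlonglongrightarrow> 0"
proof (rule LIMSEQ_I)
  fix e :: real assume e: "0 < e"
  define r where "r = (1/2) / \<beta>"
  define Err where "Err k = r * C1 * V undefined * a^k / (1 - a)" for k
  have D: "D (indicator A) r" for A :: "'a set"
    unfolding r_def by (rule D_of_bound[where c="1/2"]) (use V_ge1 in \<open>auto simp: indicator_def\<close>)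
  have est: "L (indicator (B n)) \<le> (P ^^ k) (indicator (B n)) undefined + Err k" for n k
    using L_main(2)[OF ind_adm[OF B[of n]] D, where k=k and x=undefined] unfolding Err_def by linarith
  have Elim: "Err \<longlonglongrightarrow> 0" unfolding Err_def using a_pos a_lt1
    by (intro tendsto_eq_intros LIMSEQ_power_zero) auto
  have "\<exists>no. \<forall>n\<ge>no. norm (Err n - 0) < e/2" by (rule LIMSEQ_D[OF Elim]) (use e in simp)
  then obtain k0 where "\<forall>n\<ge>k0. norm (Err n - 0) < e/2" by blast
  then have k: "Err k0 < e/2" by auto
  define k where "k = k0"
  have k: "Err k < e/2" using k unfolding k_def .
  have "(\<lambda>n. (P ^^ k) (indicator (B n)) undefined) \<longlonglongrightarrow> (P ^^ k) (\<lambda>_. 0) undefined"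
    by (rule Pk_conv[where N=1]) (use B lim V_ge1 V_pos in \<open>auto simp: indicator_def less_imp_le\<close>)
  then have "(\<lambda>n. (P ^^ k) (indicator (B n)) undefined) \<longlonglongrightarrow> 0" by (simp add: Pk_const)
  then have "\<exists>no. \<forall>n\<ge>no. norm ((P ^^ k) (indicator (B n)) undefined - 0) < e/2" by (rule LIMSEQ_D) (use e in simp)
  then obtain no where no: "\<And>n. n \<ge> no \<Longrightarrow> \<bar>(P ^^ k) (indicator (B n)) undefined\<bar> < e/2" by auto
  show "\<exists>no. \<forall>n\<ge>no. norm (L (indicator (B n)) - 0) < e"
  proof (intro exI allI impI)
    fix n assume "no \<le> n"
    have "0 \<le> L (indicator (B n))"
      using L_mono[of "\<lambda>_. 0" "indicator (B n)"] B by (auto simp: L_const)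
    then show "norm (L (indicator (B n)) - 0) < e" using est[of n k] k no[OF \<open>no \<le> n\<close>] by simp
  qed
qed


lemma ind_disj: "A \<inter> B = {} \<Longrightarrow> indicator (A \<union> B) x = (indicator A x + indicator B x :: real)"
  by (auto simp: indicator_def)

lemma L_ind_nonneg: "A \<in> sets borel \<Longrightarrow> 0 \<le> L (indicator A)"
  using L_mono[of "\<lambda>_. 0" "indicator A"] by (auto simp: L_const)

lemma L_fin_add:
  fixes A :: "nat \<Rightarrow> 'a set" and n :: nat
  assumes A: "range A \<subseteq> sets borel" "disjoint_family A"
  shows "L (indicator (\<Union>i<n. A i)) = (\<Sum>i<n. L (indicator (A i)))"
proof (induction n)
  case 0 then show ?case by (simp add: L_const)
next
  case (Suc n)
  have U: "(\<Union>i<n. A i) \<in> sets borel" using A by (intro sets.finite_UN) auto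
  have An: "A n \<in> sets borel" using A by auto
  have disj: "A n \<inter> (\<Union>i<n. A i) = {}"
  proof (rule equals0I)
    fix x assume "x \<in> A n \<inter> (\<Union>i<n. A i)"
    then obtain i where i: "i < n" "x \<in> A i" "x \<in> A n" by auto
    then have "A n \<inter> A i = {}" using A(2) unfolding disjoint_family_on_def by auto
    with i show False by auto
  qed
  have eq: "(\<Union>i<Suc n. A i) = A n \<union> (\<Union>i<n. A i)" by (auto simp: lessThan_Suc)
  have "indicator (\<Union>i<Suc n. A i) = (\<lambda>x. indicator (A n) x + indicator (\<Union>i<n. A i) x :: real)"
    unfolding eq using ind_disj[OF disj] by auto
  then have "L (indicator (\<Union>i<Suc n. A i)) = L (indicator (A n)) + L (indicator (\<Union>i<n. A i))"
    using L_add[OF ind_adm[OF An] ind_adm[OF U]] by simp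
  then show ?case using Suc by simp
qed

lemma L_sums:
  fixes A :: "nat \<Rightarrow> 'a set"
  assumes A: "range A \<subseteq> sets borel" "disjoint_family A"
  shows "(\<lambda>i. L (indicator (A i))) sums L (indicator (\<Union>i. A i))"
proof -
  define B where "B n = (\<Union>i. A i) - (\<Union>i<n. A i)" for n
  have U: "(\<Union>i. A i) \<in> sets borel" using A by auto
  have Un: "(\<Union>i<n. A i) \<in> sets borel" for n using A by (intro sets.finite_UN) auto
  have Bm: "B n \<in> sets borel" for n unfolding B_def using U Un by auto
  have split: "indicator (\<Union>i. A i) = (\<lambda>x. indicator (\<Union>i<n. A i) x + indicator (B n) x :: real)" for n
  proof -
    have "(\<Union>i. A i) = (\<Union>i<n. A i) \<union> B n" "(\<Union>i<n. A i) \<inter> B n = {}" unfolding B_def by auto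
    then show ?thesis using ind_disj by metis
  qed
  have eqL: "L (indicator (\<Union>i. A i)) = (\<Sum>i<n. L (indicator (A i))) + L (indicator (B n))" for n
    using L_add[OF ind_adm[OF Un] ind_adm[OF Bm], of n n] split[of n] L_fin_add[OF A, of n] by simp
  have lim0: "(\<lambda>n. indicator (B n) y :: real) \<longlonglongrightarrow> 0" for y
  proof (cases "y \<in> (\<Union>i. A i)")
    case True
    then obtain i where "y \<in> A i" by auto
    then have "\<forall>n\<ge>Suc i. indicator (B n) y = (0::real)" unfolding B_def by (auto simp: indicator_def)
    then show ?thesis by (intro tendsto_eventually) (auto simp: eventually_sequentially)
  next
    case False
    then show ?thesis unfolding B_def by (simp add: indicator_def)
  qed
  have "(\<lambda>n. L (indicator (\<Union>i. A i)) - L (indicator (B n))) \<longlonglongrightarrow> L (indicator (\<Union>i. A i)) - 0"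
    by (intro tendsto_intros L_tail[OF Bm lim0])
  moreover have "(\<lambda>n. L (indicator (\<Union>i. A i)) - L (indicator (B n))) = (\<lambda>n. \<Sum>i<n. L (indicator (A i)))"
    using eqL by (auto simp: algebra_simps)
  ultimately show ?thesis unfolding sums_def by simp
qed

definition "\<mu> = measure_of UNIV (sets borel) (\<lambda>A. ennreal (L (indicator A)))"

lemma sa_borel: "sigma_algebra UNIV (sets borel :: 'a set set)"
proof -
  have "sigma_algebra (space borel) (sets (borel :: 'a measure))" ..
  then show ?thesis by simp
qed

lemma \<mu>_sets[simp]: "sets \<mu> = sets borel"
  unfolding \<mu>_def using sa_borel by (simp add: sigma_algebra.sigma_sets_eq sets.space_closed)

lemma \<mu>_space[simp]: "space \<mu> = UNIV"
  unfolding \<mu>_def using sa_borel by (simp add: sigma_algebra.sigma_sets_eq sets.space_closed)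

lemma \<mu>_emeasure: "A \<in> sets borel \<Longrightarrow> emeasure \<mu> A = ennreal (L (indicator A))"
  unfolding \<mu>_def
proof (rule emeasure_measure_of_sigma[OF sa_borel])
  show "positive (sets borel) (\<lambda>A. ennreal (L (indicator A)))"
  proof -
    have "indicator {} = (\<lambda>_::'a. 0::real)" by (auto simp: indicator_def)
    then show ?thesis unfolding positive_def by (simp add: L_const)
  qed
  show "countably_additive (sets borel) (\<lambda>A. ennreal (L (indicator A)))"
  proof (rule countably_additiveI)
    fix A :: "nat \<Rightarrow> 'a set" assume A: "range A \<subseteq> sets borel" "disjoint_family A" "(\<Union>i. A i) \<in> sets borel"
    have s: "(\<lambda>i. L (indicator (A i))) sums L (indicator (\<Union>i. A i))" by (rule L_sums[OF A(1,2)])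
    have nn: "\<And>i. 0 \<le> L (indicator (A i))" using A(1) by (intro L_ind_nonneg) auto
    show "(\<Sum>i. ennreal (L (indicator (A i)))) = ennreal (L (indicator (\<Union>i. A i)))"
      using suminf_ennreal2[OF nn sums_summable[OF s]] sums_unique[OF s] by simp
  qed
qed

lemma \<mu>_prob: "prob_space \<mu>"
proof
  have "emeasure \<mu> UNIV = ennreal (L (indicator UNIV))" by (rule \<mu>_emeasure) simp
  then show "emeasure \<mu> (space \<mu>) = 1" by (simp add: L_const)
qed

lemma \<mu>_measure: "A \<in> sets borel \<Longrightarrow> measure \<mu> A = L (indicator A)"
  unfolding measure_def using \<mu>_emeasure L_ind_nonneg by simp


lemma \<mu>_meas: "f \<in> borel_measurable borel \<Longrightarrow> f \<in> borel_measurable \<mu>"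
  by (subst measurable_cong_sets[OF \<mu>_sets refl])

lemma \<mu>_int_bnd: "(f :: 'a \<Rightarrow> real) \<in> borel_measurable borel \<Longrightarrow> bounded (range f) \<Longrightarrow> integrable \<mu> f"
proof -
  assume m: "f \<in> borel_measurable borel" and "bounded (range f)"
  then obtain B where "\<And>x. \<bar>f x\<bar> \<le> B" unfolding bounded_range_iff by blast
  then show ?thesis by (rule prob_bounded(1)[OF \<mu>_prob \<mu>_sets m])
qed

lemma int_eq_L_bnd:
  assumes "\<psi> \<in> borel_measurable borel" "\<And>x. \<bar>\<psi> x\<bar> \<le> B"
  shows "(\<integral>x. \<psi> x \<partial>\<mu>) = L \<psi>"
proof (rule functional_eq[where F="\<lambda>\<psi>. \<integral>x. \<psi> x \<partial>\<mu>" and G=L, OF _ _ _ _ _ _ _ assms])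
  fix f g :: "'a \<Rightarrow> real"
  assume fg: "f \<in> borel_measurable borel" "g \<in> borel_measurable borel" "bounded (range f)" "bounded (range g)"
  show "(\<integral>x. f x + g x \<partial>\<mu>) = (\<integral>x. f x \<partial>\<mu>) + (\<integral>x. g x \<partial>\<mu>)"
    by (rule Bochner_Integration.integral_add[OF \<mu>_int_bnd[OF fg(1,3)] \<mu>_int_bnd[OF fg(2,4)]])
  show "L (\<lambda>x. f x + g x) = L f + L g" using fg by (intro L_add bnd_adm)
next
  fix f :: "'a \<Rightarrow> real" and c
  assume "f \<in> borel_measurable borel" "bounded (range f)"
  then show "(\<integral>x. c * f x \<partial>\<mu>) = c * (\<integral>x. f x \<partial>\<mu>)" by simp
  show "L (\<lambda>x. c * f x) = c * L f" using \<open>f \<in> _\<close> \<open>bounded (range f)\<close> by (intro L_scale bnd_adm)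
next
  fix f :: "'a \<Rightarrow> real" and B
  assume "f \<in> borel_measurable borel" "\<And>x. \<bar>f x\<bar> \<le> B"
  then show "\<bar>\<integral>x. f x \<partial>\<mu>\<bar> \<le> B" by (rule prob_bounded(2)[OF \<mu>_prob \<mu>_sets])
  show "\<bar>L f\<bar> \<le> B" using \<open>f \<in> _\<close> \<open>\<And>x. \<bar>f x\<bar> \<le> B\<close> by (intro L_bound adm_bounded) auto
next
  fix A :: "'a set" assume "A \<in> sets borel"
  then show "(\<integral>x. indicator A x \<partial>\<mu>) = L (indicator A)" by (simp add: \<mu>_measure)
qed

lemma P_bnd_meas: "\<psi> \<in> borel_measurable borel \<Longrightarrow> (\<And>y. \<bar>\<psi> y\<bar> \<le> B) \<Longrightarrow> P \<psi> \<in> borel_measurable borel"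
  using P_meas adm_bounded by blast

lemma inv_ind: "A \<in> sets borel \<Longrightarrow> (\<integral>x. P (indicator A) x \<partial>\<mu>) = measure \<mu> A"
proof -
  assume A: "A \<in> sets borel"
  have b: "\<bar>P (indicator A) x\<bar> \<le> 1" for x by (rule P_bnd[OF ind_adm[OF A]]) (simp add: indicator_def)
  have "(\<integral>x. P (indicator A) x \<partial>\<mu>) = L (P (indicator A))"
    by (rule int_eq_L_bnd[OF P_meas[OF ind_adm[OF A]] b])
  also have "\<dots> = L (indicator A)" by (rule L_P[OF ind_adm[OF A]])
  finally show ?thesis using \<mu>_measure[OF A] by simp
qed

lemma V_int: "integrable \<mu> V"
proof -
  define f where "f n x = min (V x) (real n)" for n x
  have fm: "f n \<in> borel_measurable borel" for n unfolding f_def[abs_def] using V_meas by simp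
  have fb: "\<bar>f n x\<bar> \<le> real n" for n x unfolding f_def using V_pos[of x] by auto
  have fa: "f n \<in> adm V" for n using adm_bounded[OF fm fb] .
  have fi: "integrable \<mu> (f n)" for n using prob_bounded(1)[OF \<mu>_prob \<mu>_sets fm fb] .
  have fL: "(\<integral>x. f n x \<partial>\<mu>) = L (f n)" for n by (rule int_eq_L_bnd[OF fm fb])
  have inc: "incseq (\<lambda>n. \<integral>x. f n x \<partial>\<mu>)"
    unfolding fL by (intro incseq_SucI L_mono fa) (auto simp: f_def)
  have bdd: "bdd_above (range (\<lambda>n. \<integral>x. f n x \<partial>\<mu>))"
    unfolding fL by (rule bdd_aboveI2[where M="L V"]) (intro L_mono fa adm_V, simp add: f_def)
  have lim: "(\<lambda>n. f n x) \<longlonglongrightarrow> V x" for x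
  proof (rule tendsto_eventually)
    obtain n0 where "V x \<le> real n0" using real_arch_simple by blast
    then show "\<forall>\<^sub>F n in sequentially. f n x = V x"
      unfolding eventually_sequentially f_def by (intro exI[of _ n0]) auto
  qed
  show ?thesis
  proof (rule integrable_monotone_convergence[OF fi])
    show "AE x in \<mu>. mono (\<lambda>n. f n x)" by (auto simp: mono_def f_def)
    show "AE x in \<mu>. (\<lambda>i. f i x) \<longlonglongrightarrow> V x" using lim by simp
    show "(\<lambda>i. \<integral>x. f i x \<partial>\<mu>) \<longlonglongrightarrow> (SUP i. \<integral>x. f i x \<partial>\<mu>)" by (rule LIMSEQ_incseq_SUP[OF bdd inc])
    show "V \<in> borel_measurable \<mu>" using \<mu>_meas[OF V_meas] .
  qed
qed

lemma adm_int: "\<phi> \<in> adm V \<Longrightarrow> integrable \<mu> \<phi>"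
proof -
  assume \<phi>: "\<phi> \<in> adm V"
  obtain N where N: "0 \<le> N" "\<And>x. \<bar>\<phi> x\<bar> \<le> N * V x" using admE[OF \<phi>] by blast
  show "integrable \<mu> \<phi>"
  proof (rule Bochner_Integration.integrable_bound[where f="\<lambda>x. N * V x"])
    show "integrable \<mu> (\<lambda>x. N * V x)" using V_int by simp
    show "\<phi> \<in> borel_measurable \<mu>" using \<mu>_meas[OF adm_meas[OF \<phi>]] .
    show "AE x in \<mu>. norm (\<phi> x) \<le> norm (N * V x)" using N V_pos by (auto simp: abs_mult less_imp_le)
  qed
qed

lemma inv_adm:
  assumes \<phi>: "\<phi> \<in> adm V"
  shows "(\<integral>x. P \<phi> x \<partial>\<mu>) = (\<integral>x. \<phi> x \<partial>\<mu>)"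
proof -
  obtain N where N: "0 \<le> N" "\<And>x. \<bar>\<phi> x\<bar> \<le> N * V x" using admE[OF \<phi>] by blast
  define t where "t n y = max (- real n) (min (real n) (\<phi> y))" for n y
  have tm: "t n \<in> borel_measurable borel" for n unfolding t_def[abs_def] using adm_meas[OF \<phi>] by simp
  have tb: "\<bar>t n y\<bar> \<le> real n" for n y unfolding t_def by auto
  have tN: "\<bar>t n y\<bar> \<le> N * V y" for n y using N(2)[of y] unfolding t_def by auto
  have ta: "t n \<in> adm V" for n using adm_bounded[OF tm tb] .
  have tlim: "(\<lambda>n. t n y) \<longlonglongrightarrow> \<phi> y" for y
  proof (rule tendsto_eventually)
    obtain n0 where "\<bar>\<phi> y\<bar> \<le> real n0" using real_arch_simple by blast
    then show "\<forall>\<^sub>F n in sequentially. t n y = \<phi> y"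
      unfolding eventually_sequentially t_def by (intro exI[of _ n0]) auto
  qed
  have eq: "(\<integral>x. P (t n) x \<partial>\<mu>) = (\<integral>x. t n x \<partial>\<mu>)" for n
  proof -
    have "(\<integral>x. P (t n) x \<partial>\<mu>) = L (P (t n))"
      by (rule int_eq_L_bnd[OF P_meas[OF ta] P_bnd[OF ta tb]])
    also have "\<dots> = L (t n)" by (rule L_P[OF ta])
    also have "\<dots> = (\<integral>x. t n x \<partial>\<mu>)" by (rule int_eq_L_bnd[OF tm tb, symmetric])
    finally show ?thesis .
  qed
  have wint: "integrable \<mu> (\<lambda>x. c * V x)" for c using V_int by simp
  have l1: "(\<lambda>n. \<integral>x. t n x \<partial>\<mu>) \<longlonglongrightarrow> (\<integral>x. \<phi> x \<partial>\<mu>)"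
    by (rule integral_dominated_convergence[where w="\<lambda>x. N * V x", OF \<mu>_meas[OF adm_meas[OF \<phi>]] \<mu>_meas[OF tm] wint])
       (use tlim tN in auto)
  have Pb: "\<bar>P (t n) y\<bar> \<le> (N * (\<gamma> + K)) * V y" for n y
  proof -
    have "\<bar>P (t n) y\<bar> \<le> N * P V y" by (rule P_bound[OF ta tN])
    also have "\<dots> \<le> N * ((\<gamma> + K) * V y)" using PV_le N(1) by (intro mult_left_mono) auto
    finally show ?thesis by (simp add: mult_ac)
  qed
  have l2: "(\<lambda>n. \<integral>x. P (t n) x \<partial>\<mu>) \<longlonglongrightarrow> (\<integral>x. P \<phi> x \<partial>\<mu>)"
    by (rule integral_dominated_convergence[where w="\<lambda>x. (N * (\<gamma> + K)) * V x", OF \<mu>_meas[OF P_meas[OF \<phi>]] \<mu>_meas[OF P_meas[OF ta]] wint])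
       (use P_conv[OF ta \<phi> tN tlim] Pb in auto)
  have "(\<lambda>n. \<integral>x. P (t n) x \<partial>\<mu>) = (\<lambda>n. \<integral>x. t n x \<partial>\<mu>)" using eq by simp
  then show ?thesis using l1 l2 LIMSEQ_unique by auto
qed

lemma int_eq_L:
  assumes \<phi>: "\<phi> \<in> adm V"
  shows "(\<integral>x. \<phi> x \<partial>\<mu>) = L \<phi>"
proof -
  have inv: "(\<integral>x. (P ^^ k) \<phi> x \<partial>\<mu>) = (\<integral>x. \<phi> x \<partial>\<mu>)" for k
  proof (induction k)
    case (Suc k) then show ?case using inv_adm[OF Pk_adm[OF \<phi>, of k]] by simp
  qed simp
  obtain r where D: "D \<phi> r" using adm_D[OF \<phi>] by blast
  have r: "0 \<le> r" using D_nonneg[OF D] .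
  define c where "c = r * C1 / (1 - a)"
  have c: "0 \<le> c" unfolding c_def using r C1_pos a_lt1 by simp
  have bnd: "\<bar>(P ^^ k) \<phi> x\<bar> \<le> \<bar>L \<phi>\<bar> + c * V x" for k x
  proof -
    have "\<bar>(P ^^ k) \<phi> x - L \<phi>\<bar> \<le> r * C1 * V x * a^k / (1 - a)" by (rule L_main(2)[OF \<phi> D])
    also have "\<dots> \<le> r * C1 * V x * 1 / (1 - a)"
      using r C1_pos V_pos[of x] a_pos a_lt1
      by (intro divide_right_mono mult_left_mono power_le_one) (auto intro: mult_nonneg_nonneg less_imp_le)
    also have "\<dots> = c * V x" unfolding c_def by simp
    finally show ?thesis by linarith
  qed
  have "(\<lambda>k. \<integral>x. (P ^^ k) \<phi> x \<partial>\<mu>) \<longlonglongrightarrow> (\<integral>x. L \<phi> \<partial>\<mu>)"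
  proof (rule integral_dominated_convergence[where w="\<lambda>x. \<bar>L \<phi>\<bar> + c * V x"])
    show "integrable \<mu> (\<lambda>x. \<bar>L \<phi>\<bar> + c * V x)"
      by (rule Bochner_Integration.integrable_add[OF finite_measure.integrable_const[OF prob_space.finite_measure[OF \<mu>_prob]]])
         (rule integrable_mult_right[OF V_int])
    show "(\<lambda>x. L \<phi>) \<in> borel_measurable \<mu>" by simp
    show "(P ^^ k) \<phi> \<in> borel_measurable \<mu>" for k using \<mu>_meas[OF adm_meas[OF Pk_adm[OF \<phi>]]] .
    show "AE x in \<mu>. (\<lambda>k. (P ^^ k) \<phi> x) \<longlonglongrightarrow> L \<phi>" using L_conv[OF \<phi>] by simp
    show "AE x in \<mu>. norm ((P ^^ k) \<phi> x) \<le> \<bar>L \<phi>\<bar> + c * V x" for k using bnd by simp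
  qed
  then have "(\<lambda>k. \<integral>x. \<phi> x \<partial>\<mu>) \<longlonglongrightarrow> L \<phi>" using inv prob_space.prob_space[OF \<mu>_prob] by simp
  then show ?thesis by (simp add: LIMSEQ_const_iff)
qed

lemma final_bound:
  assumes \<phi>: "\<phi> \<in> adm V" and M: "\<And>x. \<bar>\<phi> x - (\<integral>y. \<phi> y \<partial>\<mu>)\<bar> \<le> M * V x"
  shows "\<bar>(P ^^ k) \<phi> x - (\<integral>y. \<phi> y \<partial>\<mu>)\<bar> \<le> (C1 / (\<beta> * (1 - a))) * a^k * M * V x"
proof -
  have D: "D \<phi> (M / \<beta>)" by (rule D_of_bound[OF M])
  have "\<bar>(P ^^ k) \<phi> x - L \<phi>\<bar> \<le> (M / \<beta>) * C1 * V x * a^k / (1 - a)" by (rule L_main(2)[OF \<phi> D])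
  then show ?thesis using int_eq_L[OF \<phi>] by (simp add: field_simps)
qed


lemma Pk_bnd: "\<psi> \<in> adm V \<Longrightarrow> (\<And>y. \<bar>\<psi> y\<bar> \<le> B) \<Longrightarrow> \<bar>(P ^^ k) \<psi> x\<bar> \<le> B"
proof (induction k arbitrary: x)
  case (Suc k) then show ?case using P_bnd[OF Pk_adm[OF Suc.prems(1)]] by simp
qed simp

lemma unique:
  fixes \<rho> :: "'a measure"
  assumes \<rho>: "prob_space \<rho>" "sets \<rho> = sets borel"
    and inv: "\<And>A. A \<in> sets borel \<Longrightarrow> (\<integral>x. P (indicator A) x \<partial>\<rho>) = measure \<rho> A"
  shows "\<rho> = \<mu>"
proof -
  have sp: "space \<rho> = UNIV" using sets_eq_imp_space_eq[OF \<rho>(2)] by simp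
  have int_bnd: "integrable \<rho> f" if th: "(f :: 'a \<Rightarrow> real) \<in> borel_measurable borel" "bounded (range f)" for f
  proof -
    obtain B where "\<And>x. \<bar>f x\<bar> \<le> B" using th(2) unfolding bounded_range_iff by blast
    then show ?thesis by (rule prob_bounded(1)[OF \<rho> th(1)])
  qed
  have Pbr: "bounded (range (P f))" "P f \<in> borel_measurable borel"
    if th: "(f :: 'a \<Rightarrow> real) \<in> borel_measurable borel" "bounded (range f)" for f
  proof -
    obtain B where B: "\<And>x. \<bar>f x\<bar> \<le> B" using th(2) unfolding bounded_range_iff by blast
    show "bounded (range (P f))" unfolding bounded_range_iff using P_bnd[OF bnd_adm[OF th] B] by blast
    show "P f \<in> borel_measurable borel" using P_meas[OF bnd_adm[OF th]] .
  qed
  have Feq: "(\<integral>x. P \<psi> x \<partial>\<rho>) = (\<integral>x. \<psi> x \<partial>\<rho>)" if "\<psi> \<in> borel_measurable borel" "\<And>x. \<bar>\<psi> x\<bar> \<le> B" for \<psi> B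
  proof (rule functional_eq[where F="\<lambda>\<psi>. \<integral>x. P \<psi> x \<partial>\<rho>" and G="\<lambda>\<psi>. \<integral>x. \<psi> x \<partial>\<rho>", OF _ _ _ _ _ _ _ that])
    fix f g :: "'a \<Rightarrow> real"
    assume fg: "f \<in> borel_measurable borel" "g \<in> borel_measurable borel" "bounded (range f)" "bounded (range g)"
    show "(\<integral>x. f x + g x \<partial>\<rho>) = (\<integral>x. f x \<partial>\<rho>) + (\<integral>x. g x \<partial>\<rho>)"
      by (rule Bochner_Integration.integral_add[OF int_bnd[OF fg(1,3)] int_bnd[OF fg(2,4)]])
    have "P (\<lambda>x. f x + g x) = (\<lambda>x. P f x + P g x)" using fg by (intro P_add bnd_adm)
    then show "(\<integral>x. P (\<lambda>x. f x + g x) x \<partial>\<rho>) = (\<integral>x. P f x \<partial>\<rho>) + (\<integral>x. P g x \<partial>\<rho>)"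
      using Bochner_Integration.integral_add[OF int_bnd[OF Pbr(2)[OF fg(1,3)] Pbr(1)[OF fg(1,3)]]
          int_bnd[OF Pbr(2)[OF fg(2,4)] Pbr(1)[OF fg(2,4)]]] by simp
  next
    fix f :: "'a \<Rightarrow> real" and c
    assume f: "f \<in> borel_measurable borel" "bounded (range f)"
    show "(\<integral>x. c * f x \<partial>\<rho>) = c * (\<integral>x. f x \<partial>\<rho>)" by simp
    have "P (\<lambda>x. c * f x) = (\<lambda>x. c * P f x)" using f by (intro P_scale bnd_adm)
    then show "(\<integral>x. P (\<lambda>x. c * f x) x \<partial>\<rho>) = c * (\<integral>x. P f x \<partial>\<rho>)" by simp
  next
    fix f :: "'a \<Rightarrow> real" and B
    assume f: "f \<in> borel_measurable borel" "\<And>x. \<bar>f x\<bar> \<le> B"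
    then show "\<bar>\<integral>x. f x \<partial>\<rho>\<bar> \<le> B" by (rule prob_bounded(2)[OF \<rho>])
    have fa: "f \<in> adm V" using adm_bounded[OF f] .
    show "\<bar>\<integral>x. P f x \<partial>\<rho>\<bar> \<le> B" by (rule prob_bounded(2)[OF \<rho> P_meas[OF fa] P_bnd[OF fa f(2)]])
  next
    fix A :: "'a set" assume "A \<in> sets borel"
    then show "(\<integral>x. P (indicator A) x \<partial>\<rho>) = (\<integral>x. indicator A x \<partial>\<rho>)" using inv sp by simp
  qed
  have meq: "measure \<rho> A = measure \<mu> A" if A: "A \<in> sets borel" for A
  proof -
    have b: "\<bar>(P ^^ k) (indicator A) x\<bar> \<le> 1" for k x by (rule Pk_bnd[OF ind_adm[OF A]]) (simp add: indicator_def)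
    have "(\<integral>x. (P ^^ k) (indicator A) x \<partial>\<rho>) = measure \<rho> A" for k
    proof (induction k)
      case 0 then show ?case using sp by simp
    next
      case (Suc k)
      have "(\<integral>x. P ((P ^^ k) (indicator A)) x \<partial>\<rho>) = (\<integral>x. (P ^^ k) (indicator A) x \<partial>\<rho>)"
        by (rule Feq[OF adm_meas[OF Pk_adm[OF ind_adm[OF A]]] b])
      then show ?case using Suc by simp
    qed
    moreover have "(\<lambda>k. \<integral>x. (P ^^ k) (indicator A) x \<partial>\<rho>) \<longlonglongrightarrow> (\<integral>x. L (indicator A) \<partial>\<rho>)"
    proof (rule integral_dominated_convergence[where w="\<lambda>_. 1"])
      show "integrable \<rho> (\<lambda>_. 1::real)" using finite_measure.integrable_const[OF prob_space.finite_measure[OF \<rho>(1)]] .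
      show "(\<lambda>x. L (indicator A)) \<in> borel_measurable \<rho>" by simp
      show "(P ^^ k) (indicator A) \<in> borel_measurable \<rho>" for k
        by (subst measurable_cong_sets[OF \<rho>(2) refl]) (rule adm_meas[OF Pk_adm[OF ind_adm[OF A]]])
      show "AE x in \<rho>. (\<lambda>k. (P ^^ k) (indicator A) x) \<longlonglongrightarrow> L (indicator A)" using L_conv[OF ind_adm[OF A]] by simp
      show "AE x in \<rho>. norm ((P ^^ k) (indicator A) x) \<le> 1" for k using b by simp
    qed
    ultimately have "(\<lambda>k. measure \<rho> A) \<longlonglongrightarrow> L (indicator A)" using prob_space.prob_space[OF \<rho>(1)] by simp
    then have "measure \<rho> A = L (indicator A)" by (simp add: LIMSEQ_const_iff)
    then show ?thesis using \<mu>_measure[OF A] by simp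
  qed
  show "\<rho> = \<mu>"
  proof (rule measure_eqI)
    show "sets \<rho> = sets \<mu>" using \<rho>(2) by simp
    fix A assume "A \<in> sets \<rho>"
    then have A: "A \<in> sets borel" using \<rho>(2) by simp
    show "emeasure \<rho> A = emeasure \<mu> A"
      using finite_measure.emeasure_eq_measure[OF prob_space.finite_measure[OF \<rho>(1)]] finite_measure.emeasure_eq_measure[OF prob_space.finite_measure[OF \<mu>_prob]] meq[OF A] by simp
  qed
qed

end



locale conc =
  fixes Q :: "'a::polish_space \<Rightarrow> 'a measure"
    and K :: "nat \<Rightarrow> 'a set"
    and W :: "'a \<Rightarrow> real"
    and \<gamma> b \<alpha> :: "nat \<Rightarrow> real"
    and \<eta> :: "nat \<Rightarrow> 'a measure"
    and \<Lambda> :: real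
    and h :: "'a \<Rightarrow> real"
  assumes kernel: "is_kernel Q"
    and K_compact: "\<And>n. n \<ge> 1 \<Longrightarrow> compact (K n)"
    and K_mono: "\<And>n. n \<ge> 1 \<Longrightarrow> K n \<subseteq> K (Suc n)"
    and K_exhaust: "\<And>C. compact C \<Longrightarrow> \<exists>m\<ge>1. C \<subseteq> K m"
    and W_meas: "W \<in> borel_measurable borel"
    and W_ge1: "\<And>x. W x \<ge> 1"
    and W_bdd: "\<And>C. compact C \<Longrightarrow> bounded (W ` C)"
    and \<gamma>_pos: "\<And>n. n \<ge> 1 \<Longrightarrow> \<gamma> n > 0"
    and b_pos: "\<And>n. n \<ge> 1 \<Longrightarrow> b n > 0"
    and \<gamma>_lim: "\<gamma> \<longlonglongrightarrow> 0"
    and lyap: "\<And>n x. n \<ge> 1 \<Longrightarrow>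
       (\<integral>\<^sup>+y. ennreal (W y) \<partial>(Q x)) \<le> ennreal (\<gamma> n * W x + b n * indicator (K n) x)"
    and \<eta>_prob: "\<And>n. n \<ge> 1 \<Longrightarrow> prob_space (\<eta> n) \<and> sets (\<eta> n) = sets borel"
    and \<alpha>_pos: "\<And>n. n \<ge> 1 \<Longrightarrow> \<alpha> n > 0"
    and minor: "\<And>n x A. n \<ge> 1 \<Longrightarrow> x \<in> K n \<Longrightarrow> A \<in> sets borel \<Longrightarrow>
       emeasure (Q x) A \<ge> ennreal (\<alpha> n) * emeasure (\<eta> n) A"
    and \<Lambda>_pos: "\<Lambda> > 0"
    and h_in: "h \<in> LinfV W"
    and h_eig: "kop Q h = (\<lambda>x. \<Lambda> * h x)"
    and h_norm: "normV W h = 1"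
    and h_pos: "\<And>x. h x > 0"
begin

lemma Qsets[simp, measurable_cong]: "sets (Q x) = sets borel"
  using kernel unfolding is_kernel_def by blast

lemma Qspace[simp]: "space (Q x) = UNIV"
  using sets_eq_imp_space_eq[OF Qsets] by simp

lemma Qfin: "finite_measure (Q x)"
  using kernel unfolding is_kernel_def by blast

lemma Qemeas: "A \<in> sets borel \<Longrightarrow> (\<lambda>x. emeasure (Q x) A) \<in> borel_measurable borel"
  using kernel unfolding is_kernel_def by blast

lemma meas_Q: "f \<in> borel_measurable borel \<Longrightarrow> f \<in> borel_measurable (Q x)"
  by (subst measurable_cong_sets[OF Qsets refl])

lemma kernel_nn_meas:
  fixes f :: "'a \<Rightarrow> ennreal"
  assumes f: "f \<in> borel_measurable borel"
  shows "(\<lambda>x. \<integral>\<^sup>+y. f y \<partial>Q x) \<in> borel_measurable borel"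
  using f
proof induct
  case (cong f g)
  have "(\<lambda>x. \<integral>\<^sup>+y. f y \<partial>Q x) = (\<lambda>x. \<integral>\<^sup>+y. g y \<partial>Q x)"
    using cong(3) by (intro ext nn_integral_cong) simp
  with cong show ?case by simp
next
  case (set A)
  have "(\<lambda>x. \<integral>\<^sup>+y. indicator A y \<partial>Q x) = (\<lambda>x. emeasure (Q x) A)"
    using set by (intro ext nn_integral_indicator) simp
  with Qemeas[OF set] show ?case by simp
next
  case (mult u c)
  have "(\<lambda>x. \<integral>\<^sup>+y. c * u y \<partial>Q x) = (\<lambda>x. c * \<integral>\<^sup>+y. u y \<partial>Q x)"
    using mult by (intro ext nn_integral_cmult meas_Q)
  with mult show ?case by simp
next
  case (add u v)
  have "(\<lambda>x. \<integral>\<^sup>+y. v y + u y \<partial>Q x) = (\<lambda>x. (\<integral>\<^sup>+y. v y \<partial>Q x) + (\<integral>\<^sup>+y. u y \<partial>Q x))"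
    using add by (intro ext nn_integral_add meas_Q)
  with add show ?case by simp
next
  case (seq U)
  have "(\<lambda>x. \<integral>\<^sup>+y. (SUP i. U i) y \<partial>Q x) = (\<lambda>x. SUP i. \<integral>\<^sup>+y. U i y \<partial>Q x)"
    unfolding SUP_apply using seq by (intro ext nn_integral_monotone_convergence_SUP meas_Q) auto
  with seq show ?case by simp
qed

lemma h_meas: "h \<in> borel_measurable borel" using h_in unfolding LinfV_def by simp

lemma h_le_W: "h x \<le> W x"
proof -
  have bdd: "bdd_above (range (\<lambda>x. \<bar>h x\<bar> / W x))" using h_in unfolding LinfV_def by simp
  have "\<bar>h x\<bar> / W x \<le> 1" using cSUP_upper[OF UNIV_I bdd, of x] h_norm unfolding normV_def by simp
  then show ?thesis using W_ge1[of x] h_pos[of x] by (simp add: divide_le_eq)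
qed

lemma W_nn_fin: "(\<integral>\<^sup>+y. ennreal (W y) \<partial>Q x) < \<infinity>"
  using lyap[of 1 x] by (auto simp: less_top[symmetric] top_unique)

lemma W_int: "integrable (Q x) W"
  by (rule integrableI_bounded) (use W_nn_fin W_ge1 meas_Q[OF W_meas] in \<open>auto simp: abs_of_nonneg order_trans[OF zero_le_one]\<close>)

lemma int_Q: assumes "f \<in> borel_measurable borel" "\<And>y. \<bar>f y\<bar> \<le> N * W y" shows "integrable (Q x) f"
proof (rule Bochner_Integration.integrable_bound[where f="\<lambda>y. N * W y"])
  show "integrable (Q x) (\<lambda>y. N * W y)" using W_int by simp
  show "f \<in> borel_measurable (Q x)" using meas_Q[OF assms(1)] .
  show "AE y in Q x. norm (f y) \<le> norm (N * W y)" using assms(2) by (auto intro: order_trans[OF _ abs_ge_self])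
qed

lemma kop_meas: assumes f: "f \<in> borel_measurable borel" "\<And>y. \<bar>f y\<bar> \<le> N * W y"
  shows "kop Q f \<in> borel_measurable borel"
proof -
  have "kop Q f = (\<lambda>x. enn2real (\<integral>\<^sup>+y. ennreal (f y) \<partial>Q x) - enn2real (\<integral>\<^sup>+y. ennreal (- f y) \<partial>Q x))"
    unfolding kop_def by (intro ext real_lebesgue_integral_def int_Q[OF f])
  also have "\<dots> \<in> borel_measurable borel"
    using kernel_nn_meas[of "\<lambda>y. ennreal (f y)"] kernel_nn_meas[of "\<lambda>y. ennreal (- f y)"] f(1) by simp
  finally show ?thesis .
qed


definition "V x = W x / h x"

lemma V_ge1: "1 \<le> V x" unfolding V_def using h_le_W[of x] h_pos[of x] by simp
lemma V_meas: "V \<in> borel_measurable borel" unfolding V_def[abs_def] using W_meas h_meas by simp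

lemma adm_h: assumes "\<phi> \<in> adm V"
  obtains N where "(\<lambda>y. h y * \<phi> y) \<in> borel_measurable borel" "\<And>y. \<bar>h y * \<phi> y\<bar> \<le> N * W y"
proof -
  obtain N where N: "\<phi> \<in> borel_measurable borel" "\<And>y. \<bar>\<phi> y\<bar> \<le> N * V y" using assms unfolding adm_def by blast
  have "\<bar>h y * \<phi> y\<bar> \<le> N * W y" for y
  proof -
    have "\<bar>h y * \<phi> y\<bar> = h y * \<bar>\<phi> y\<bar>" using h_pos[of y] by (simp add: abs_mult)
    also have "\<dots> \<le> h y * (N * V y)" using N(2)[of y] h_pos[of y] by (intro mult_left_mono) auto
    also have "\<dots> = N * W y" unfolding V_def using h_pos[of y] by simp
    finally show ?thesis .
  qed
  moreover have "(\<lambda>y. h y * \<phi> y) \<in> borel_measurable borel" using N(1) h_meas by simp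
  ultimately show ?thesis using that by blast
qed

lemma kop_add: "f \<in> borel_measurable borel \<Longrightarrow> (\<And>y. \<bar>f y\<bar> \<le> N * W y) \<Longrightarrow> g \<in> borel_measurable borel \<Longrightarrow> (\<And>y. \<bar>g y\<bar> \<le> M * W y)
   \<Longrightarrow> kop Q (\<lambda>y. f y + g y) x = kop Q f x + kop Q g x"
  unfolding kop_def by (intro Bochner_Integration.integral_add int_Q)

lemma kop_scale: "kop Q (\<lambda>y. c * f y) x = c * kop Q f x"
  unfolding kop_def by simp

lemma kop_mono: "f \<in> borel_measurable borel \<Longrightarrow> (\<And>y. \<bar>f y\<bar> \<le> N * W y) \<Longrightarrow> g \<in> borel_measurable borel \<Longrightarrow> (\<And>y. \<bar>g y\<bar> \<le> M * W y)
   \<Longrightarrow> (\<And>y. f y \<le> g y) \<Longrightarrow> kop Q f x \<le> kop Q g x"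
  unfolding kop_def by (intro integral_mono int_Q) auto

abbreviation "PP \<equiv> htrans Q \<Lambda> h"

lemma PP_meas: "\<phi> \<in> adm V \<Longrightarrow> PP \<phi> \<in> borel_measurable borel"
proof -
  assume a: "\<phi> \<in> adm V"
  obtain N where N: "(\<lambda>y. h y * \<phi> y) \<in> borel_measurable borel" "\<And>y. \<bar>h y * \<phi> y\<bar> \<le> N * W y" using adm_h[OF a] by blast
  have "PP \<phi> = (\<lambda>x. kop Q (\<lambda>y. h y * \<phi> y) x / (\<Lambda> * h x))" unfolding htrans_def by (intro ext) simp
  also have "\<dots> \<in> borel_measurable borel" using kop_meas[OF N] h_meas by simp
  finally show ?thesis .
qed

lemma PP_add: "\<phi> \<in> adm V \<Longrightarrow> \<psi> \<in> adm V \<Longrightarrow> PP (\<lambda>x. \<phi> x + \<psi> x) = (\<lambda>x. PP \<phi> x + PP \<psi> x)"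
proof -
  assume "\<phi> \<in> adm V" "\<psi> \<in> adm V"
  then obtain N M where N: "(\<lambda>y. h y * \<phi> y) \<in> borel_measurable borel" "\<And>y. \<bar>h y * \<phi> y\<bar> \<le> N * W y"
    and M: "(\<lambda>y. h y * \<psi> y) \<in> borel_measurable borel" "\<And>y. \<bar>h y * \<psi> y\<bar> \<le> M * W y" by (metis adm_h)
  show ?thesis
  proof (rule ext)
    fix x
    have "kop Q (\<lambda>y. h y * (\<phi> y + \<psi> y)) x = kop Q (\<lambda>y. h y * \<phi> y + h y * \<psi> y) x" by (simp add: distrib_left)
    also have "\<dots> = kop Q (\<lambda>y. h y * \<phi> y) x + kop Q (\<lambda>y. h y * \<psi> y) x" by (rule kop_add[OF N M])
    finally show "PP (\<lambda>x. \<phi> x + \<psi> x) x = PP \<phi> x + PP \<psi> x" unfolding htrans_def by (simp add: add_divide_distrib)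
  qed
qed

lemma PP_scale: "PP (\<lambda>x. c * \<phi> x) = (\<lambda>x. c * PP \<phi> x)"
proof (rule ext)
  fix x
  have "kop Q (\<lambda>y. h y * (c * \<phi> y)) x = c * kop Q (\<lambda>y. h y * \<phi> y) x"
    using kop_scale[of c "\<lambda>y. h y * \<phi> y" x] by (simp add: mult_ac)
  then show "PP (\<lambda>x. c * \<phi> x) x = c * PP \<phi> x" unfolding htrans_def by simp
qed

lemma PP_const: "PP (\<lambda>_. c) = (\<lambda>_. c)"
proof (rule ext)
  fix x
  have "kop Q (\<lambda>y. h y * c) x = c * kop Q h x" using kop_scale[of c h x] by (simp add: mult_ac)
  also have "\<dots> = c * (\<Lambda> * h x)" using h_eig by simp
  finally show "PP (\<lambda>_. c) x = c" unfolding htrans_def using \<Lambda>_pos h_pos[of x] by simp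
qed

lemma PP_mono: "\<phi> \<in> adm V \<Longrightarrow> \<psi> \<in> adm V \<Longrightarrow> (\<And>y. \<phi> y \<le> \<psi> y) \<Longrightarrow> PP \<phi> x \<le> PP \<psi> x"
proof -
  assume "\<phi> \<in> adm V" "\<psi> \<in> adm V" and le: "\<And>y. \<phi> y \<le> \<psi> y"
  then obtain N M where N: "(\<lambda>y. h y * \<phi> y) \<in> borel_measurable borel" "\<And>y. \<bar>h y * \<phi> y\<bar> \<le> N * W y"
    and M: "(\<lambda>y. h y * \<psi> y) \<in> borel_measurable borel" "\<And>y. \<bar>h y * \<psi> y\<bar> \<le> M * W y" by (metis adm_h)
  have "kop Q (\<lambda>y. h y * \<phi> y) x \<le> kop Q (\<lambda>y. h y * \<psi> y) x"
    by (rule kop_mono[OF N M]) (use le h_pos in \<open>simp add: mult_left_mono less_imp_le\<close>)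
  then show ?thesis unfolding htrans_def using \<Lambda>_pos h_pos[of x] by (simp add: divide_right_mono)
qed

lemma PP_conv:
  assumes "\<And>n. \<phi>s n \<in> adm V" "\<phi> \<in> adm V" "\<And>n y. \<bar>\<phi>s n y\<bar> \<le> N * V y" "\<And>y. (\<lambda>n. \<phi>s n y) \<longlonglongrightarrow> \<phi> y"
  shows "(\<lambda>n. PP (\<phi>s n) x) \<longlonglongrightarrow> PP \<phi> x"
proof -
  have "(\<lambda>n. kop Q (\<lambda>y. h y * \<phi>s n y) x) \<longlonglongrightarrow> kop Q (\<lambda>y. h y * \<phi> y) x"
    unfolding kop_def
  proof (rule integral_dominated_convergence[where w="\<lambda>y. N * W y"])
    obtain M where "(\<lambda>y. h y * \<phi> y) \<in> borel_measurable borel" "\<And>y. \<bar>h y * \<phi> y\<bar> \<le> M * W y" using adm_h[OF assms(2)] by blast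
    then show "(\<lambda>y. h y * \<phi> y) \<in> borel_measurable (Q x)" using meas_Q by blast
    show "(\<lambda>y. h y * \<phi>s n y) \<in> borel_measurable (Q x)" for n
      using meas_Q adm_h[OF assms(1)[of n]] by metis
    show "integrable (Q x) (\<lambda>y. N * W y)" using W_int by simp
    show "AE y in Q x. (\<lambda>n. h y * \<phi>s n y) \<longlonglongrightarrow> h y * \<phi> y" using assms(4) by (simp add: tendsto_mult_left)
    show "AE y in Q x. norm (h y * \<phi>s n y) \<le> N * W y" for n
    proof -
      have "\<bar>h y * \<phi>s n y\<bar> \<le> N * W y" for y
      proof -
        have "\<bar>h y * \<phi>s n y\<bar> = h y * \<bar>\<phi>s n y\<bar>" using h_pos[of y] by (simp add: abs_mult)
        also have "\<dots> \<le> h y * (N * V y)" using assms(3)[of n y] h_pos[of y] by (intro mult_left_mono) auto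
        also have "\<dots> = N * W y" unfolding V_def using h_pos[of y] by simp
        finally show ?thesis .
      qed
      then show ?thesis by simp
    qed
  qed
  then show ?thesis unfolding htrans_def using \<Lambda>_pos h_pos[of x] by (intro tendsto_intros) auto
qed


lemma eta_sets[simp, measurable_cong]: "n \<ge> 1 \<Longrightarrow> sets (\<eta> n) = sets borel" using \<eta>_prob by blast
lemma eta_space[simp]: "n \<ge> 1 \<Longrightarrow> space (\<eta> n) = UNIV" using sets_eq_imp_space_eq[OF eta_sets] by simp
lemma meas_eta: "n \<ge> 1 \<Longrightarrow> f \<in> borel_measurable borel \<Longrightarrow> f \<in> borel_measurable (\<eta> n)"
  by (subst measurable_cong_sets[OF eta_sets refl])

lemma Q_ge_eta_nn:
  fixes g :: "'a \<Rightarrow> ennreal"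
  assumes n: "n \<ge> 1" and x: "x \<in> K n" and g: "g \<in> borel_measurable borel"
  shows "ennreal (\<alpha> n) * (\<integral>\<^sup>+y. g y \<partial>\<eta> n) \<le> (\<integral>\<^sup>+y. g y \<partial>Q x)"
proof -
  have e: "sets (scale_measure (ennreal (\<alpha> n)) (\<eta> n)) = sets (Q x)" using n by simp
  have sp: "space (scale_measure (ennreal (\<alpha> n)) (\<eta> n)) = space (Q x)" using sets_eq_imp_space_eq[OF e] .
  have em: "emeasure (scale_measure (ennreal (\<alpha> n)) (\<eta> n)) \<le> emeasure (Q x)"
  proof (rule le_funI)
    fix A show "emeasure (scale_measure (ennreal (\<alpha> n)) (\<eta> n)) A \<le> emeasure (Q x) A"
    proof (cases "A \<in> sets borel")
      case True then show ?thesis using minor[OF n x True] by simp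
    next
      case False then show ?thesis using n by (simp add: emeasure_notin_sets)
    qed
  qed
  have le: "scale_measure (ennreal (\<alpha> n)) (\<eta> n) \<le> Q x"
    unfolding le_measure_iff using e sp em by simp
  have "(\<integral>\<^sup>+y. g y \<partial>scale_measure (ennreal (\<alpha> n)) (\<eta> n)) \<le> (\<integral>\<^sup>+y. g y \<partial>Q x)"
    by (rule nn_integral_mono_measure[OF e le])
  moreover have "(\<integral>\<^sup>+y. g y \<partial>scale_measure (ennreal (\<alpha> n)) (\<eta> n)) = ennreal (\<alpha> n) * (\<integral>\<^sup>+y. g y \<partial>\<eta> n)"
    by (rule nn_integral_scale_measure[OF meas_eta[OF n g]])
  ultimately show ?thesis by simp
qed

lemma eta_W_fin: assumes n: "n \<ge> 1" and x: "x \<in> K n" shows "(\<integral>\<^sup>+y. ennreal (W y) \<partial>\<eta> n) < \<infinity>"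
proof -
  have "ennreal (\<alpha> n) * (\<integral>\<^sup>+y. ennreal (W y) \<partial>\<eta> n) < \<infinity>"
    using Q_ge_eta_nn[OF n x, of "\<lambda>y. ennreal (W y)"] W_meas W_nn_fin[of x] by (auto intro: le_less_trans)
  then have "(\<integral>\<^sup>+y. ennreal (W y) \<partial>\<eta> n) = 0 \<or> (\<integral>\<^sup>+y. ennreal (W y) \<partial>\<eta> n) < \<infinity>"
    using \<alpha>_pos[OF n] by (simp add: ennreal_mult_less_top top.not_eq_extremum)
  then show ?thesis by auto
qed

lemma eta_int: assumes n: "n \<ge> 1" and x: "x \<in> K n" and f: "f \<in> borel_measurable borel" "\<And>y. \<bar>f y\<bar> \<le> N * W y"
  shows "integrable (\<eta> n) f"
proof (rule Bochner_Integration.integrable_bound[where f="\<lambda>y. N * W y"])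
  have "integrable (\<eta> n) W"
    by (rule integrableI_bounded) (use eta_W_fin[OF n x] W_ge1 meas_eta[OF n W_meas] in \<open>auto simp: abs_of_nonneg order_trans[OF zero_le_one]\<close>)
  then show "integrable (\<eta> n) (\<lambda>y. N * W y)" by simp
  show "f \<in> borel_measurable (\<eta> n)" using meas_eta[OF n f(1)] .
  show "AE y in \<eta> n. norm (f y) \<le> norm (N * W y)" using f(2) by (auto intro: order_trans[OF _ abs_ge_self])
qed

lemma eta_le_kop: assumes n: "n \<ge> 1" and x: "x \<in> K n" and f: "f \<in> borel_measurable borel" "\<And>y. \<bar>f y\<bar> \<le> N * W y"
    and nn: "\<And>y. 0 \<le> f y"
  shows "\<alpha> n * (\<integral>y. f y \<partial>\<eta> n) \<le> kop Q f x"
proof -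
  have i1: "integrable (\<eta> n) f" by (rule eta_int[OF n x f])
  have i2: "integrable (Q x) f" by (rule int_Q[OF f])
  have "ennreal (\<alpha> n * (\<integral>y. f y \<partial>\<eta> n)) = ennreal (\<alpha> n) * ennreal (\<integral>y. f y \<partial>\<eta> n)"
    using \<alpha>_pos[OF n] by (simp add: ennreal_mult')
  also have "ennreal (\<integral>y. f y \<partial>\<eta> n) = (\<integral>\<^sup>+y. ennreal (f y) \<partial>\<eta> n)"
    by (rule nn_integral_eq_integral[OF i1, symmetric]) (simp add: nn)
  also have "ennreal (\<alpha> n) * \<dots> \<le> (\<integral>\<^sup>+y. ennreal (f y) \<partial>Q x)" by (rule Q_ge_eta_nn[OF n x]) (use f in simp)
  also have "\<dots> = ennreal (kop Q f x)" unfolding kop_def by (rule nn_integral_eq_integral[OF i2]) (simp add: nn)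
  finally show ?thesis using nn by (simp add: kop_def integral_nonneg_AE)
qed

lemma h_bound: "\<bar>h y\<bar> \<le> 1 * W y" using h_le_W[of y] h_pos[of y] by simp

lemma h_eta_pos: assumes n: "n \<ge> 1" and x: "x \<in> K n" shows "0 < (\<integral>y. h y \<partial>\<eta> n)"
proof -
  interpret prob_space "\<eta> n" using \<eta>_prob[OF n] by blast
  have i: "integrable (\<eta> n) h" by (rule eta_int[OF n x h_meas h_bound])
  have nn: "0 \<le> (\<integral>y. h y \<partial>\<eta> n)" using h_pos by (simp add: integral_nonneg_AE less_imp_le)
  moreover have "(\<integral>y. h y \<partial>\<eta> n) \<noteq> 0"
  proof
    assume "(\<integral>y. h y \<partial>\<eta> n) = 0"
    then have "AE y in \<eta> n. h y = 0" using integral_nonneg_eq_0_iff_AE[OF i] h_pos by (simp add: less_imp_le)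
    moreover have "AE y in \<eta> n. h y = 0 \<longrightarrow> False" using h_pos by (intro AE_I2) (metis less_irrefl)
    ultimately have "AE y in \<eta> n. False" by (rule AE_mp)
    then show False by simp
  qed
  ultimately show ?thesis by simp
qed

lemma h_lower: assumes n: "n \<ge> 1" and x: "x \<in> K n" shows "\<alpha> n * (\<integral>y. h y \<partial>\<eta> n) \<le> \<Lambda> * h x"
  using eta_le_kop[OF n x h_meas h_bound] h_pos h_eig by (simp add: less_imp_le)

lemma kop_W: "n \<ge> 1 \<Longrightarrow> kop Q W x \<le> \<gamma> n * W x + b n * indicator (K n) x"
proof -
  assume n: "n \<ge> 1"
  have nn: "0 \<le> \<gamma> n * W x + b n * indicator (K n) x"
    using \<gamma>_pos[OF n] b_pos[OF n] W_ge1[of x] by (simp add: indicator_def)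
  have "kop Q W x = enn2real (\<integral>\<^sup>+y. ennreal (W y) \<partial>Q x)"
    unfolding kop_def by (rule integral_eq_nn_integral) (use meas_Q[OF W_meas] W_ge1 in \<open>auto intro: order_trans[OF zero_le_one]\<close>)
  also have "\<dots> \<le> \<gamma> n * W x + b n * indicator (K n) x" by (rule enn2real_leI[OF nn lyap[OF n]])
  finally show ?thesis .
qed

lemma PPV: "PP V x = kop Q W x / (\<Lambda> * h x)"
proof -
  have "(\<lambda>y. h y * V y) = W" unfolding V_def using h_pos by (auto intro!: ext simp: less_imp_neq[symmetric])
  then show ?thesis unfolding htrans_def by simp
qed


lemma K_mono': "1 \<le> n \<Longrightarrow> n \<le> m \<Longrightarrow> K n \<subseteq> K m"
proof (induction m)
  case 0 then show ?case by simp
next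
  case (Suc m)
  show ?case
  proof (cases "n = Suc m")
    case False
    then have "n \<le> m" using Suc.prems by simp
    then show ?thesis using Suc.IH Suc.prems K_mono[of m] by (meson order_trans)
  qed simp
qed

lemma adm_const_c: "(\<lambda>_. c) \<in> adm V"
  unfolding adm_def using V_ge1 by (auto intro!: exI[of _ "\<bar>c\<bar>"] simp: mult_le_cancel_left1)

lemma adm_V_c: "V \<in> adm V"
proof -
  have "0 \<le> V x" for x using V_ge1[of x] by simp
  then show ?thesis unfolding adm_def using V_meas by (auto intro!: exI[of _ 1])
qed

lemma V_eq: "V = (\<lambda>x. W x / h x)" unfolding V_def by (rule ext) simp

lemma main:
  shows "(\<forall>x. htrans Q \<Lambda> h (\<lambda>_. 1) x = 1)
    \<and> (\<forall>x. W x / h x \<ge> 1)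
    \<and> (\<exists>g C. 0 < g \<and> g < 1 \<and> C \<ge> 0 \<and>
          (\<forall>x. htrans Q \<Lambda> h (\<lambda>y. W y / h y) x \<le> g * (W x / h x) + C))
    \<and> (\<exists>\<mu>. (prob_space \<mu> \<and> sets \<mu> = sets borel \<and>
              (\<forall>A\<in>sets borel. (\<integral>x. htrans Q \<Lambda> h (indicator A) x \<partial>\<mu>) = measure \<mu> A))
         \<and> (\<forall>\<nu>. prob_space \<nu> \<and> sets \<nu> = sets borel \<and>
              (\<forall>A\<in>sets borel. (\<integral>x. htrans Q \<Lambda> h (indicator A) x \<partial>\<nu>) = measure \<nu> A)
              \<longrightarrow> \<nu> = \<mu>)
         \<and> (\<integral>\<^sup>+x. ennreal (W x / h x) \<partial>\<mu>) < \<infinity>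
         \<and> (\<exists>c a. c > 0 \<and> 0 < a \<and> a < 1 \<and>
              (\<forall>\<phi>\<in>LinfV (\<lambda>x. W x / h x). \<forall>k::nat. k \<ge> 1 \<longrightarrow>
                 normV (\<lambda>x. W x / h x) (\<lambda>x. (htrans Q \<Lambda> h ^^ k) \<phi> x - (\<integral>y. \<phi> y \<partial>\<mu>))
                 \<le> c * a ^ k * normV (\<lambda>x. W x / h x) (\<lambda>x. \<phi> x - (\<integral>y. \<phi> y \<partial>\<mu>)))))"
proof -
  have "\<forall>\<^sub>F n in sequentially. \<gamma> n < \<Lambda> / 4" by (rule order_tendstoD(2)[OF \<gamma>_lim]) (use \<Lambda>_pos in simp)
  then obtain N1 where N1: "\<And>n. n \<ge> N1 \<Longrightarrow> \<gamma> n < \<Lambda> / 4" unfolding eventually_sequentially by blast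
  define n0 where "n0 = max N1 1"
  have n0: "n0 \<ge> 1" "\<gamma> n0 < \<Lambda> / 4" unfolding n0_def using N1 by auto
  define g where "g = \<gamma> n0 / \<Lambda>"
  have g: "0 < g" "g \<le> 1/4" unfolding g_def using n0 \<gamma>_pos[OF n0(1)] \<Lambda>_pos by (auto simp: divide_le_eq)
  define c0 where "c0 = (\<integral>y. h y \<partial>\<eta> n0)"
  define Kc where "Kc = b n0 / (\<alpha> n0 * c0)"
  have c0: "0 \<le> c0" unfolding c0_def using h_pos by (simp add: integral_nonneg_AE less_imp_le)
  have Kc: "0 \<le> Kc" unfolding Kc_def using b_pos[OF n0(1)] \<alpha>_pos[OF n0(1)] c0 by simp
  have drift: "PP V x \<le> g * V x + Kc" for x
  proof -
    have hx: "0 < \<Lambda> * h x" using \<Lambda>_pos h_pos[of x] by simp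
    have "PP V x \<le> (\<gamma> n0 * W x + b n0 * indicator (K n0) x) / (\<Lambda> * h x)"
      unfolding PPV using kop_W[OF n0(1)] hx by (simp add: divide_right_mono)
    also have "\<dots> = g * V x + b n0 * indicator (K n0) x / (\<Lambda> * h x)"
      unfolding g_def V_def using hx by (simp add: add_divide_distrib)
    also have "b n0 * indicator (K n0) x / (\<Lambda> * h x) \<le> Kc"
    proof (cases "x \<in> K n0")
      case True
      have pos: "0 < \<alpha> n0 * c0" using \<alpha>_pos[OF n0(1)] h_eta_pos[OF n0(1) True] unfolding c0_def by simp
      have "\<alpha> n0 * c0 \<le> \<Lambda> * h x" using h_lower[OF n0(1) True] unfolding c0_def .
      then have "b n0 / (\<Lambda> * h x) \<le> b n0 / (\<alpha> n0 * c0)"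
        using pos b_pos[OF n0(1)] by (intro divide_left_mono) auto
      then show ?thesis using True unfolding Kc_def by simp
    next
      case False then show ?thesis using Kc by simp
    qed
    finally show ?thesis by simp
  qed
  define R where "R = 8 * Kc + 1"
  have R: "0 < R" unfolding R_def using Kc by simp
  obtain m1 where m1: "m1 \<ge> 1" "{undefined} \<subseteq> K m1" using K_exhaust[of "{undefined}"] by auto
  have "\<forall>\<^sub>F n in sequentially. \<gamma> n < \<Lambda> / R" by (rule order_tendstoD(2)[OF \<gamma>_lim]) (use \<Lambda>_pos R in simp)
  then obtain N2 where N2: "\<And>n. n \<ge> N2 \<Longrightarrow> \<gamma> n < \<Lambda> / R" unfolding eventually_sequentially by blast
  define m where "m = max m1 N2"
  have m: "m \<ge> 1" "\<gamma> m < \<Lambda> / R" "undefined \<in> K m"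
    unfolding m_def using N2 m1 K_mono'[OF m1(1), of "max m1 N2"] by auto
  have PP1: "1 \<le> PP V x" for x
  proof -
    have "PP (\<lambda>_. 1) x \<le> PP V x" by (rule PP_mono[OF adm_const_c adm_V_c]) (use V_ge1 in auto)
    then show ?thesis by (simp add: PP_const)
  qed
  have level: "x \<in> K m" if Vx: "V x \<le> R" for x
  proof (rule ccontr)
    assume nx: "x \<notin> K m"
    have hx: "0 < \<Lambda> * h x" using \<Lambda>_pos h_pos[of x] by simp
    have "PP V x \<le> (\<gamma> m * W x + b m * indicator (K m) x) / (\<Lambda> * h x)"
      unfolding PPV using kop_W[OF m(1)] hx by (simp add: divide_right_mono)
    also have "\<dots> = (\<gamma> m / \<Lambda>) * V x" using nx hx unfolding V_def by simp
    also have "\<dots> \<le> (\<gamma> m / \<Lambda>) * R" using Vx \<gamma>_pos[OF m(1)] \<Lambda>_pos by (intro mult_left_mono) auto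
    also have "\<dots> < 1" using m(2) R \<Lambda>_pos by (simp add: field_simps)
    finally show False using PP1[of x] by simp
  qed
  obtain H0 where H0: "\<And>y. y \<in> K m \<Longrightarrow> \<bar>W y\<bar> \<le> H0"
    using W_bdd[OF K_compact[OF m(1)]] unfolding bounded_iff by auto
  define H where "H = max H0 1"
  have H: "1 \<le> H" "\<And>y. y \<in> K m \<Longrightarrow> h y \<le> H"
    unfolding H_def using H0 h_le_W by (auto intro: order_trans[OF _ abs_ge_self] simp: le_max_iff_disj) (metis abs_ge_self order_trans)
  define cm where "cm = (\<integral>y. h y \<partial>\<eta> m)"
  have cm: "0 < cm" unfolding cm_def by (rule h_eta_pos[OF m(1) m(3)])
  define \<nu> where "\<nu> \<psi> = (\<integral>y. h y * \<psi> y \<partial>\<eta> m) / cm" for \<psi>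
  define \<epsilon>0 where "\<epsilon>0 = \<alpha> m * cm / (\<Lambda> * H)"
  have \<epsilon>0: "0 < \<epsilon>0" unfolding \<epsilon>0_def using \<alpha>_pos[OF m(1)] cm \<Lambda>_pos H(1) by simp
  define \<epsilon> where "\<epsilon> = min 1 \<epsilon>0"
  have \<epsilon>: "0 < \<epsilon>" "\<epsilon> \<le> 1" "\<epsilon> \<le> \<epsilon>0" unfolding \<epsilon>_def using \<epsilon>0 by auto
  have hint: "integrable (\<eta> m) (\<lambda>y. h y * \<psi> y)" if a: "\<psi> \<in> adm V" for \<psi>
  proof -
    obtain N where "(\<lambda>y. h y * \<psi> y) \<in> borel_measurable borel" "\<And>y. \<bar>h y * \<psi> y\<bar> \<le> N * W y"
      using adm_h[OF a] by blast
    then show ?thesis by (rule eta_int[OF m(1) m(3)])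
  qed
  interpret H: harris PP V g Kc R \<epsilon> \<nu>
  proof
    show "V \<in> borel_measurable borel" by (rule V_meas)
    show "\<And>x. 1 \<le> V x" by (rule V_ge1)
    show "\<And>\<phi>. \<phi> \<in> adm V \<Longrightarrow> PP \<phi> \<in> borel_measurable borel" by (rule PP_meas)
    show "\<And>\<phi> \<psi>. \<phi> \<in> adm V \<Longrightarrow> \<psi> \<in> adm V \<Longrightarrow> PP (\<lambda>x. \<phi> x + \<psi> x) = (\<lambda>x. PP \<phi> x + PP \<psi> x)" by (rule PP_add)
    show "\<And>\<phi> c. \<phi> \<in> adm V \<Longrightarrow> PP (\<lambda>x. c * \<phi> x) = (\<lambda>x. c * PP \<phi> x)" by (rule PP_scale)
    show "\<And>c. PP (\<lambda>_. c) = (\<lambda>_. c)" by (rule PP_const)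
    show "\<And>\<phi> \<psi> x. \<phi> \<in> adm V \<Longrightarrow> \<psi> \<in> adm V \<Longrightarrow> (\<And>y. \<phi> y \<le> \<psi> y) \<Longrightarrow> PP \<phi> x \<le> PP \<psi> x" by (rule PP_mono)
    show "\<And>x. PP V x \<le> g * V x + Kc" by (rule drift)
    show "0 \<le> g" "g \<le> 1/4" using g by auto
    show "0 \<le> Kc" by (rule Kc)
    show "8 * Kc < R" unfolding R_def by simp
    show "0 < \<epsilon>" "\<epsilon> \<le> 1" using \<epsilon> by auto
    show "\<And>\<phi> \<psi>. \<phi> \<in> adm V \<Longrightarrow> \<psi> \<in> adm V \<Longrightarrow> \<nu> (\<lambda>x. \<phi> x + \<psi> x) = \<nu> \<phi> + \<nu> \<psi>"
    proof -
      fix \<phi> \<psi> assume a: "\<phi> \<in> adm V" "\<psi> \<in> adm V"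
      have "(\<integral>y. h y * (\<phi> y + \<psi> y) \<partial>\<eta> m) = (\<integral>y. h y * \<phi> y + h y * \<psi> y \<partial>\<eta> m)" by (simp add: distrib_left)
      also have "\<dots> = (\<integral>y. h y * \<phi> y \<partial>\<eta> m) + (\<integral>y. h y * \<psi> y \<partial>\<eta> m)"
        by (rule Bochner_Integration.integral_add[OF hint[OF a(1)] hint[OF a(2)]])
      finally show "\<nu> (\<lambda>x. \<phi> x + \<psi> x) = \<nu> \<phi> + \<nu> \<psi>" unfolding \<nu>_def by (simp add: add_divide_distrib)
    qed
    show "\<And>\<phi> c. \<phi> \<in> adm V \<Longrightarrow> \<nu> (\<lambda>x. c * \<phi> x) = c * \<nu> \<phi>"
    proof -
      fix \<phi> :: "'a \<Rightarrow> real" and c :: real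
      have "(\<integral>y. h y * (c * \<phi> y) \<partial>\<eta> m) = c * (\<integral>y. h y * \<phi> y \<partial>\<eta> m)"
        by (simp add: mult.left_commute)
      then show "\<nu> (\<lambda>x. c * \<phi> x) = c * \<nu> \<phi>" unfolding \<nu>_def by simp
    qed
    show "\<nu> (\<lambda>_. 1) = 1" unfolding \<nu>_def using cm unfolding cm_def by simp
    show "0 \<le> \<nu> V"
    proof -
      have "(\<lambda>y. h y * V y) = W" unfolding V_def using h_pos by (auto intro!: ext simp: less_imp_neq[symmetric])
      moreover have "0 \<le> (\<integral>y. W y \<partial>\<eta> m)" using W_ge1 by (simp add: integral_nonneg_AE order_trans[OF zero_le_one])
      ultimately show ?thesis unfolding \<nu>_def using cm by simp
    qed
    show "\<And>\<psi> x. \<psi> \<in> adm V \<Longrightarrow> (\<And>y. 0 \<le> \<psi> y) \<Longrightarrow> V x \<le> R \<Longrightarrow> \<epsilon> * \<nu> \<psi> \<le> PP \<psi> x"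
    proof -
      fix \<psi> x assume \<psi>: "\<psi> \<in> adm V" and nn: "\<And>y. 0 \<le> \<psi> y" and Vx: "V x \<le> R"
      have xK: "x \<in> K m" by (rule level[OF Vx])
      obtain N where N: "(\<lambda>y. h y * \<psi> y) \<in> borel_measurable borel" "\<And>y. \<bar>h y * \<psi> y\<bar> \<le> N * W y"
        using adm_h[OF \<psi>] by blast
      have nn2: "\<And>y. 0 \<le> h y * \<psi> y" using nn h_pos by (simp add: less_imp_le)
      define I where "I = (\<integral>y. h y * \<psi> y \<partial>\<eta> m)"
      have I: "0 \<le> I" unfolding I_def using nn2 by (simp add: integral_nonneg_AE)
      have k: "\<alpha> m * I \<le> kop Q (\<lambda>y. h y * \<psi> y) x" unfolding I_def by (rule eta_le_kop[OF m(1) xK N nn2])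
      have hx: "0 < \<Lambda> * h x" using \<Lambda>_pos h_pos[of x] by simp
      have hH: "\<Lambda> * h x \<le> \<Lambda> * H" using H(2)[OF xK] \<Lambda>_pos by simp
      have "\<epsilon> * \<nu> \<psi> \<le> \<epsilon>0 * \<nu> \<psi>" using \<epsilon>(3) I cm unfolding \<nu>_def I_def[symmetric] by (intro mult_right_mono) auto
      also have "\<epsilon>0 * \<nu> \<psi> = \<alpha> m * I / (\<Lambda> * H)" unfolding \<epsilon>0_def \<nu>_def I_def[symmetric] using cm by simp
      also have "\<dots> \<le> \<alpha> m * I / (\<Lambda> * h x)"
        using hx hH I \<alpha>_pos[OF m(1)] by (intro divide_left_mono) auto
      also have "\<dots> \<le> kop Q (\<lambda>y. h y * \<psi> y) x / (\<Lambda> * h x)" using k hx by (simp add: divide_right_mono)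
      also have "\<dots> = PP \<psi> x" unfolding htrans_def by simp
      finally show "\<epsilon> * \<nu> \<psi> \<le> PP \<psi> x" .
    qed
    show "\<And>\<phi>s \<phi> N x. (\<And>n. \<phi>s n \<in> adm V) \<Longrightarrow> \<phi> \<in> adm V \<Longrightarrow> (\<And>n y. \<bar>\<phi>s n y\<bar> \<le> N * V y)
        \<Longrightarrow> (\<And>y. (\<lambda>n. \<phi>s n y) \<longlonglongrightarrow> \<phi> y) \<Longrightarrow> (\<lambda>n. PP (\<phi>s n) x) \<longlonglongrightarrow> PP \<phi> x"
      by (rule PP_conv)
  qed
  have Veq: "(\<lambda>x. W x / h x) = V" by (simp add: V_eq)
  define cc where "cc = H.C1 / (H.\<beta> * (1 - H.a))"
  have cc: "0 < cc" unfolding cc_def using H.C1_pos H.\<beta>_pos H.a_lt1 by simp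
  have conv: "normV V (\<lambda>x. (PP ^^ k) \<phi> x - (\<integral>y. \<phi> y \<partial>H.\<mu>))
                 \<le> cc * H.a ^ k * normV V (\<lambda>x. \<phi> x - (\<integral>y. \<phi> y \<partial>H.\<mu>))"
    if \<phi>: "\<phi> \<in> LinfV V" for \<phi> k
  proof -
    define c0 where "c0 = (\<integral>y. \<phi> y \<partial>H.\<mu>)"
    have \<phi>m: "\<phi> \<in> borel_measurable borel" and bdd: "bdd_above (range (\<lambda>x. \<bar>\<phi> x\<bar> / V x))"
      using \<phi> unfolding LinfV_def by auto
    obtain B where B: "\<And>x. \<bar>\<phi> x\<bar> / V x \<le> B" using bdd unfolding bdd_above_def by auto
    have Vp: "0 < V x" for x using V_ge1[of x] by simp
    have \<phi>a: "\<phi> \<in> adm V"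
      unfolding adm_def using \<phi>m B Vp by (auto intro!: exI[of _ B] simp: divide_le_eq)
    have bdd2: "bdd_above (range (\<lambda>x. \<bar>\<phi> x - c0\<bar> / V x))"
    proof (rule bdd_aboveI2)
      fix x
      have "\<bar>\<phi> x - c0\<bar> / V x \<le> (\<bar>\<phi> x\<bar> + \<bar>c0\<bar>) / V x" using Vp[of x] by (intro divide_right_mono) auto
      also have "\<dots> = \<bar>\<phi> x\<bar> / V x + \<bar>c0\<bar> / V x" by (simp add: add_divide_distrib)
      also have "\<bar>c0\<bar> / V x \<le> \<bar>c0\<bar>" using V_ge1[of x] by (simp add: divide_le_eq mult_le_cancel_left1 mult.commute)
      finally show "\<bar>\<phi> x - c0\<bar> / V x \<le> B + \<bar>c0\<bar>" using B[of x] by linarith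
    qed
    define M where "M = normV V (\<lambda>x. \<phi> x - c0)"
    have M: "\<bar>\<phi> x - c0\<bar> \<le> M * V x" for x
    proof -
      have "\<bar>\<phi> x - c0\<bar> / V x \<le> M" unfolding M_def normV_def by (rule cSUP_upper[OF UNIV_I bdd2])
      then show ?thesis using Vp[of x] by (simp add: divide_le_eq)
    qed
    have fb: "\<bar>(PP ^^ k) \<phi> x - c0\<bar> \<le> cc * H.a^k * M * V x" for x
      using H.final_bound[OF \<phi>a M[unfolded c0_def], of k x] unfolding cc_def c0_def by simp
    have "normV V (\<lambda>x. (PP ^^ k) \<phi> x - c0) \<le> cc * H.a^k * M"
      unfolding normV_def
    proof (rule cSUP_least)
      fix x show "\<bar>(PP ^^ k) \<phi> x - c0\<bar> / V x \<le> cc * H.a^k * M" using fb[of x] Vp[of x] by (simp add: divide_le_eq)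
    qed simp
    then show ?thesis unfolding M_def c0_def .
  qed
  have f1: "\<forall>x. PP (\<lambda>_. 1) x = 1" using PP_const by simp
  have f2: "\<forall>x. 1 \<le> V x" using V_ge1 by simp
  have f3: "\<exists>g C. 0 < g \<and> g < 1 \<and> C \<ge> 0 \<and> (\<forall>x. PP V x \<le> g * V x + C)"
    using g Kc drift by (intro exI[of _ g] exI[of _ Kc]) auto
  have u: "\<forall>\<nu>'. prob_space \<nu>' \<and> sets \<nu>' = sets borel \<and> (\<forall>A\<in>sets borel. (\<integral>x. PP (indicator A) x \<partial>\<nu>') = measure \<nu>' A) \<longrightarrow> \<nu>' = H.\<mu>"
    using H.unique by blast
  have fin: "(\<integral>\<^sup>+x. ennreal (V x) \<partial>H.\<mu>) < \<infinity>"
    using integrableD(2)[OF H.V_int] V_ge1 by (simp add: abs_of_nonneg order_trans[OF zero_le_one] less_top)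
  have ca: "\<exists>c a. c > 0 \<and> 0 < a \<and> a < 1 \<and>
              (\<forall>\<phi>\<in>LinfV V. \<forall>k::nat. k \<ge> 1 \<longrightarrow>
                 normV V (\<lambda>x. (PP ^^ k) \<phi> x - (\<integral>y. \<phi> y \<partial>H.\<mu>))
                 \<le> c * a ^ k * normV V (\<lambda>x. \<phi> x - (\<integral>y. \<phi> y \<partial>H.\<mu>)))"
    using cc H.a_pos H.a_lt1 conv by (intro exI[of _ cc] exI[of _ H.a]) auto
  have f4: "\<exists>\<mu>. (prob_space \<mu> \<and> sets \<mu> = sets borel \<and>
              (\<forall>A\<in>sets borel. (\<integral>x. PP (indicator A) x \<partial>\<mu>) = measure \<mu> A))
         \<and> (\<forall>\<nu>. prob_space \<nu> \<and> sets \<nu> = sets borel \<and>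
              (\<forall>A\<in>sets borel. (\<integral>x. PP (indicator A) x \<partial>\<nu>) = measure \<nu> A)
              \<longrightarrow> \<nu> = \<mu>)
         \<and> (\<integral>\<^sup>+x. ennreal (V x) \<partial>\<mu>) < \<infinity>
         \<and> (\<exists>c a. c > 0 \<and> 0 < a \<and> a < 1 \<and>
              (\<forall>\<phi>\<in>LinfV V. \<forall>k::nat. k \<ge> 1 \<longrightarrow>
                 normV V (\<lambda>x. (PP ^^ k) \<phi> x - (\<integral>y. \<phi> y \<partial>\<mu>))
                 \<le> c * a ^ k * normV V (\<lambda>x. \<phi> x - (\<integral>y. \<phi> y \<partial>\<mu>))))"
    by (rule exI[of _ H.\<mu>]) (use H.\<mu>_prob H.inv_ind u fin ca in simp)
  show ?thesis
    unfolding Veq V_def[symmetric] using f1 f2 f3 f4 by (intro conjI)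
qed

end

theorem lemma3:
  fixes Q :: "'a::polish_space \<Rightarrow> 'a measure"
    and K :: "nat \<Rightarrow> 'a set"
    and W :: "'a \<Rightarrow> real"
    and \<gamma> b \<alpha> :: "nat \<Rightarrow> real"
    and \<eta> :: "nat \<Rightarrow> 'a measure"
    and \<Lambda> :: real
    and h :: "'a \<Rightarrow> real"
  assumes kernel: "is_kernel Q"
    and K_compact: "\<And>n. n \<ge> 1 \<Longrightarrow> compact (K n)"
    and K_mono: "\<And>n. n \<ge> 1 \<Longrightarrow> K n \<subseteq> K (Suc n)"
    and K_exhaust: "\<And>C. compact C \<Longrightarrow> \<exists>m\<ge>1. C \<subseteq> K m"
    (* Assumption 1 *)
    and W_meas: "W \<in> borel_measurable borel"
    and W_ge1: "\<And>x. W x \<ge> 1"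
    and W_bdd: "\<And>C. compact C \<Longrightarrow> bounded (W ` C)"
    and \<gamma>_pos: "\<And>n. n \<ge> 1 \<Longrightarrow> \<gamma> n > 0"
    and b_pos: "\<And>n. n \<ge> 1 \<Longrightarrow> b n > 0"
    and \<gamma>_lim: "\<gamma> \<longlonglongrightarrow> 0"
    and lyap: "\<And>n x. n \<ge> 1 \<Longrightarrow>
       (\<integral>\<^sup>+y. ennreal (W y) \<partial>(Q x)) \<le> ennreal (\<gamma> n * W x + b n * indicator (K n) x)"
    (* Assumption 2 *)
    and \<eta>_prob: "\<And>n. n \<ge> 1 \<Longrightarrow> prob_space (\<eta> n) \<and> sets (\<eta> n) = sets borel"
    and \<alpha>_pos: "\<And>n. n \<ge> 1 \<Longrightarrow> \<alpha> n > 0"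
    and minor: "\<And>n x A. n \<ge> 1 \<Longrightarrow> x \<in> K n \<Longrightarrow> A \<in> sets borel \<Longrightarrow>
       emeasure (Q x) A \<ge> ennreal (\<alpha> n) * emeasure (\<eta> n) A"
    and irred: "\<And>n0 \<phi>. n0 \<ge> 1 \<Longrightarrow> \<phi> \<in> LinfV W \<Longrightarrow> (\<forall>x. \<phi> x \<ge> 0) \<Longrightarrow>
       (\<forall>n\<ge>n0. (\<integral>\<^sup>+y. ennreal (\<phi> y) \<partial>(\<eta> n)) = 0) \<Longrightarrow>
       (\<forall>x. (\<integral>\<^sup>+y. ennreal (\<phi> y) \<partial>(Q x)) = 0)"
    (* Assumption 3 *)
    and regular: "\<And>n \<phi>. n \<ge> 1 \<Longrightarrow> \<phi> \<in> borel_measurable borel \<Longrightarrow> bounded (\<phi> ` K n) \<Longrightarrow>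
       continuous_on (K n) (kop Q (\<lambda>y. \<phi> y * indicator (K n) y))"
    (* spectral radius and eigenfunction *)
    and \<Lambda>_def: "\<Lambda> = spectral_radiusV W Q"
    and \<Lambda>_pos: "\<Lambda> > 0"
    and h_in: "h \<in> LinfV W"
    and h_eig: "kop Q h = (\<lambda>x. \<Lambda> * h x)"
    and h_norm: "normV W h = 1"
    and h_pos: "\<And>x. h x > 0"
  shows "(\<forall>x. htrans Q \<Lambda> h (\<lambda>_. 1) x = 1)
    \<and> (\<forall>x. W x / h x \<ge> 1)
    \<and> (\<exists>g C. 0 < g \<and> g < 1 \<and> C \<ge> 0 \<and>
          (\<forall>x. htrans Q \<Lambda> h (\<lambda>y. W y / h y) x \<le> g * (W x / h x) + C))
    \<and> (\<exists>\<mu>. (prob_space \<mu> \<and> sets \<mu> = sets borel \<and>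
              (\<forall>A\<in>sets borel. (\<integral>x. htrans Q \<Lambda> h (indicator A) x \<partial>\<mu>) = measure \<mu> A))
         \<and> (\<forall>\<nu>. prob_space \<nu> \<and> sets \<nu> = sets borel \<and>
              (\<forall>A\<in>sets borel. (\<integral>x. htrans Q \<Lambda> h (indicator A) x \<partial>\<nu>) = measure \<nu> A)
              \<longrightarrow> \<nu> = \<mu>)
         \<and> (\<integral>\<^sup>+x. ennreal (W x / h x) \<partial>\<mu>) < \<infinity>
         \<and> (\<exists>c a. c > 0 \<and> 0 < a \<and> a < 1 \<and>
              (\<forall>\<phi>\<in>LinfV (\<lambda>x. W x / h x). \<forall>k::nat. k \<ge> 1 \<longrightarrow>
                 normV (\<lambda>x. W x / h x) (\<lambda>x. (htrans Q \<Lambda> h ^^ k) \<phi> x - (\<integral>y. \<phi> y \<partial>\<mu>))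
                 \<le> c * a ^ k * normV (\<lambda>x. W x / h x) (\<lambda>x. \<phi> x - (\<integral>y. \<phi> y \<partial>\<mu>)))))"
  proof -
  have C: "conc Q K W \<gamma> b \<alpha> \<eta> \<Lambda> h"
    by (rule conc.intro[OF kernel K_compact K_mono K_exhaust W_meas W_ge1 W_bdd \<gamma>_pos b_pos \<gamma>_lim lyap
          \<eta>_prob \<alpha>_pos minor \<Lambda>_pos h_in h_eig h_norm h_pos])
  show ?thesis by (rule conc.main[OF C])
qed

end
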